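(* Assume the market model described in the context, in particular the standing assumption $M'(t,y)>-\tfrac12\,\mathrm{sgn}(y)\,P'(t,y)$ for all $t,y$. Let $Z^1$ be a trading strategy that is either càdlàg or càglàd (as in the context). Then the cost process $T^{Z^1}_t$ (given by the càdlàg formula if $Z^1$ is càdlàg and by the càglàd formula if $Z^1$ is càglàd) is non-negative and increasing on $[0,T]$.
   Context: Fix $T>0$ and a filtered probability space $(\Omega,\mathcal F,(\mathcal F_t)_{t\in[0,T]},\mathbb P)$ satisfying the usual conditions, with $\mathcal F_0$ trivial. There is a riskless asset with constant price $1$ and a risky asset bought at the ask price $A(t,y)$ and sold at the bid price $B(t,y)$, where $y>0$ is a buy order and $y<0$ a sell order of size $y$. Assumptions: $A(t,y),B(t,y)$ are adapted and non-negative; $A(\cdot,0),B(\cdot,0)$ are non-negative locally bounded semimartingales; $A,B$ are $C^2$ in $y$ and their first and second $y$-derivatives are càdlàg and locally bounded in $t$. Set $M(t,y)=\tfrac12(A(t,y)+B(t,y))$ (mid-price) and $P(t,y)=A(t,y)-B(t,y)$ (bid-ask spread); a prime denotes $\partial/\partial y$. Standing assumption: $M'(t,y)>-\tfrac12\mathrm{sgn}(y)P'(t,y)$ for all $t,y$. A trading strategy is $Z=(Z^0,Z^1)$ with $Z^1$ the number of risky shares held; $Z^1$ is either a càdlàg predictable process, a continuous adapted process, or a càglàd adapted process, with finite pathwise quadratic variation $[Z^1,Z^1]_T=\lim_n\sum_{i\ge1}|Z^1_{\tau^n_i}-Z^1_{\tau^n_{i-1}}|^2$ (existing and finite a.s.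 for every sequence of random partitions of $[0,T]$ by stopping times tending to the identity). $\Delta Z^1_t$ denotes the trade at time $t$, $y(t)=\mathrm{sgn}(\Delta Z^1_t)$. Cost process for càdlàg $Z^1$: $T^{Z^1}_t=\int_0^t M'(s,0)\,d[Z^1,Z^1]_s+\sum_{0<s\le t}(Z^1_s-Z^1_{s-})^2(M'(s,0)-M'(s-,0))+\tfrac12\sum_{0<s\le t}[M'(s,Z^1_s-Z^1_{s-})-M'(s,0)](Z^1_s-Z^1_{s-})^2+\tfrac12\int_0^tP'(s,0)y(s)\,d[Z^1,Z^1]_s+\tfrac12\sum_{0<s\le t}|Z^1_s-Z^1_{s-}|(Z^1_s-Z^1_{s-})(P'(s,0)-P'(s-,0))+\tfrac14\sum_{0<s\le t}|Z^1_s-Z^1_{s-}|(Z^1_s-Z^1_{s-})(P'(s,Z^1_s-Z^1_{s-})-P'(s,0))$. Cost process for càglàd $Z^1$: $T^{Z^1}_t=\int_0^tM'(s,0)\,d[Z^1,Z^1]_s+\sum_{0\le s<t}\tfrac12[M'(s,Z^1_{s+}-Z^1_s)-M'(s,0)](Z^1_{s+}-Z^1_s)^2+\tfrac12\int_0^tP'(s,0)y(s)\,d[Z^1,Z^1]_s+\tfrac14\sum_{0\le s<t}|Z^1_{s+}-Z^1_s|(Z^1_{s+}-Z^1_s)(P'(s,Z^1_{s+}-Z^1_s)-P'(s,0))$. *)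

theory Defs
  imports "HOL-Analysis.Analysis"
begin

text \<open>Pathwise rendering of the market model. Time is restricted to [0,T].\<close>

definition lft :: "(real \<Rightarrow> real) \<Rightarrow> real \<Rightarrow> real" where
  "lft f s = Lim (at_left s) f"

definition rgt :: "(real \<Rightarrow> real) \<Rightarrow> real \<Rightarrow> real" where
  "rgt f s = Lim (at_right s) f"

definition cadlag_on :: "real \<Rightarrow> (real \<Rightarrow> real) \<Rightarrow> bool" where
  "cadlag_on T f \<longleftrightarrow> (\<forall>s\<in>{0..<T}. continuous (at_right s) f) \<and>
                      (\<forall>s\<in>{0<..T}. \<exists>l. (f \<longlongrightarrow> l) (at_left s))"

definition caglad_on :: "real \<Rightarrow> (real \<Rightarrow> real) \<Rightarrow> bool" where
  "caglad_on T f \<longleftrightarrow> (\<forall>s\<in>{0<..T}. continuous (at_left s) f) \<and>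
                      (\<forall>s\<in>{0..<T}. \<exists>l. (f \<longlongrightarrow> l) (at_right s))"

definition C2_fun :: "(real \<Rightarrow> real) \<Rightarrow> bool" where
  "C2_fun f \<longleftrightarrow> (\<forall>y. f differentiable (at y)) \<and> (\<forall>y. deriv f differentiable (at y))
                 \<and> continuous_on UNIV (deriv (deriv f))"

text \<open>Mid-price derivative M' and spread derivative P' (derivative in the order size y).\<close>
definition Mp :: "(real \<Rightarrow> real \<Rightarrow> real) \<Rightarrow> (real \<Rightarrow> real \<Rightarrow> real) \<Rightarrow> real \<Rightarrow> real \<Rightarrow> real" where
  "Mp A B t y = deriv (\<lambda>z. (A t z + B t z) / 2) y"

definition Pp :: "(real \<Rightarrow> real \<Rightarrow> real) \<Rightarrow> (real \<Rightarrow> real \<Rightarrow> real) \<Rightarrow> real \<Rightarrow> real \<Rightarrow> real" where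
  "Pp A B t y = deriv (\<lambda>z. A t z - B t z) y"

definition price_ok :: "real \<Rightarrow> (real \<Rightarrow> real \<Rightarrow> real) \<Rightarrow> bool" where
  "price_ok T A \<longleftrightarrow>
     (\<forall>t\<in>{0..T}. \<forall>y. 0 \<le> A t y) \<and>
     cadlag_on T (\<lambda>t. A t 0) \<and>
     (\<forall>t\<in>{0..T}. C2_fun (A t)) \<and>
     (\<forall>y. cadlag_on T (\<lambda>t. deriv (A t) y)) \<and>
     (\<forall>y. cadlag_on T (\<lambda>t. deriv (deriv (A t)) y)) \<and>
     (\<forall>R. \<exists>K. \<forall>t\<in>{0..T}. \<forall>y. \<bar>y\<bar> \<le> R \<longrightarrow>
          \<bar>deriv (A t) y\<bar> \<le> K \<and> \<bar>deriv (deriv (A t)) y\<bar> \<le> K)"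

text \<open>Path q of the quadratic variation [Z,Z]: nondecreasing, starts at 0, and its jumps
  are the squared jumps (trades) of Z; right-continuous for cadlag Z, left-continuous
  for caglad Z.\<close>
definition qv_cadlag :: "real \<Rightarrow> (real \<Rightarrow> real) \<Rightarrow> (real \<Rightarrow> real) \<Rightarrow> bool" where
  "qv_cadlag T Z q \<longleftrightarrow> mono_on {0..T} q \<and> q 0 = 0 \<and>
     (\<forall>s\<in>{0..<T}. continuous (at_right s) q) \<and>
     (\<forall>s\<in>{0<..T}. (q \<longlongrightarrow> q s - (Z s - lft Z s)\<^sup>2) (at_left s))"

definition qv_caglad :: "real \<Rightarrow> (real \<Rightarrow> real) \<Rightarrow> (real \<Rightarrow> real) \<Rightarrow> bool" where
  "qv_caglad T Z q \<longleftrightarrow> mono_on {0..T} q \<and> q 0 = 0 \<and>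
     (\<forall>s\<in>{0<..T}. continuous (at_left s) q) \<and>
     (\<forall>s\<in>{0..<T}. (q \<longlongrightarrow> q s + (rgt Z s - Z s)\<^sup>2) (at_right s))"

text \<open>Lebesgue--Stieltjes measure d[Z,Z] on the real line: q is extended constantly outside
  [0,T] and regularised to the right; the measure of (a,b] is then q(b+) - q(a+), and the
  measure of [a,b) is q(b-)-q(a-).\<close>
definition qext :: "real \<Rightarrow> (real \<Rightarrow> real) \<Rightarrow> real \<Rightarrow> real" where
  "qext T q x = q (max 0 (min x T))"

definition LS :: "real \<Rightarrow> (real \<Rightarrow> real) \<Rightarrow> real measure" where
  "LS T q = interval_measure (\<lambda>x. rgt (qext T q) x)"

text \<open>Cost process for cadlag Z. The stochastic integrals against d[Z,Z] use the
  left-limit (predictable) version of the integrand, as usual for Ito integrals.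
  Here y(s) = sgn(Z s - Z s-).\<close>
definition cost_cadlag ::
  "real \<Rightarrow> (real \<Rightarrow> real \<Rightarrow> real) \<Rightarrow> (real \<Rightarrow> real \<Rightarrow> real) \<Rightarrow> (real \<Rightarrow> real) \<Rightarrow> (real \<Rightarrow> real)
     \<Rightarrow> real \<Rightarrow> real" where
  "cost_cadlag T A B Z q t =
     set_lebesgue_integral (LS T q) {0<..t} (\<lambda>s. lft (\<lambda>r. Mp A B r 0) s)
   + infsum (\<lambda>s. (Z s - lft Z s)\<^sup>2 * (Mp A B s 0 - lft (\<lambda>r. Mp A B r 0) s)) {0<..t}
   + infsum (\<lambda>s. 1/2 * (Mp A B s (Z s - lft Z s) - Mp A B s 0) * (Z s - lft Z s)\<^sup>2) {0<..t}
   + 1/2 * set_lebesgue_integral (LS T q) {0<..t}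
             (\<lambda>s. lft (\<lambda>r. Pp A B r 0) s * sgn (Z s - lft Z s))
   + infsum (\<lambda>s. 1/2 * \<bar>Z s - lft Z s\<bar> * (Z s - lft Z s)
                   * (Pp A B s 0 - lft (\<lambda>r. Pp A B r 0) s)) {0<..t}
   + infsum (\<lambda>s. 1/4 * \<bar>Z s - lft Z s\<bar> * (Z s - lft Z s)
                   * (Pp A B s (Z s - lft Z s) - Pp A B s 0)) {0<..t}"

text \<open>Cost process for caglad Z; the trade at time s is Z(s+) - Z(s), y(s) its sign.\<close>
definition cost_caglad ::
  "real \<Rightarrow> (real \<Rightarrow> real \<Rightarrow> real) \<Rightarrow> (real \<Rightarrow> real \<Rightarrow> real) \<Rightarrow> (real \<Rightarrow> real) \<Rightarrow> (real \<Rightarrow> real)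
     \<Rightarrow> real \<Rightarrow> real" where
  "cost_caglad T A B Z q t =
     set_lebesgue_integral (LS T q) {0..<t} (\<lambda>s. Mp A B s 0)
   + infsum (\<lambda>s. 1/2 * (Mp A B s (rgt Z s - Z s) - Mp A B s 0) * (rgt Z s - Z s)\<^sup>2) {0..<t}
   + 1/2 * set_lebesgue_integral (LS T q) {0..<t} (\<lambda>s. Pp A B s 0 * sgn (rgt Z s - Z s))
   + infsum (\<lambda>s. 1/4 * \<bar>rgt Z s - Z s\<bar> * (rgt Z s - Z s)
                   * (Pp A B s (rgt Z s - Z s) - Pp A B s 0)) {0..<t}"

definition nonneg_increasing :: "real \<Rightarrow> (real \<Rightarrow> real) \<Rightarrow> bool" where
  "nonneg_increasing T C \<longleftrightarrow> (\<forall>t\<in>{0..T}. 0 \<le> C t) \<and> mono_on {0..T} C"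

end

theory Submission
  imports Defs
begin

lemma meas_countable_support:
  fixes f :: "real \<Rightarrow> real"
  assumes "countable {x. f x \<noteq> 0}"
  shows "f \<in> borel_measurable borel"
proof (rule borel_measurable_continuous_countable_exceptions[OF assms])
  have "continuous_on (- {x. f x \<noteq> 0}) (\<lambda>x. 0::real)" by (rule continuous_on_const)
  then show "continuous_on (- {x. f x \<noteq> 0}) f"
    by (rule continuous_on_cong[THEN iffD1, rotated 2]) auto
qed

lemma real_summable_comparison:
  fixes f g :: "'a \<Rightarrow> real"
  assumes "g summable_on A" "\<And>x. x \<in> A \<Longrightarrow> \<bar>f x\<bar> \<le> g x"
  shows "f summable_on A"
proof -
  have "Infinite_Sum.abs_summable_on g A"
    using assms summable_on_iff_abs_summable_on_real by blast
  then have "Infinite_Sum.abs_summable_on f A"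
    by (rule Infinite_Sum.abs_summable_on_comparison_test) (use assms(2) in \<open>fastforce intro: order_trans[OF _ abs_ge_self]\<close>)
  then show ?thesis using summable_on_iff_abs_summable_on_real by blast
qed

lemma atom_nn_ennreal:
  fixes \<mu> :: "real measure"
  assumes fm: "finite_measure \<mu>" and sets: "sets \<mu> = sets borel" and J: "countable J"
    and pos: "\<And>s. s \<in> J \<Longrightarrow> 0 \<le> g s"
  shows "(\<integral>\<^sup>+ x. ennreal (indicator J x * g x) \<partial>\<mu>) = (\<integral>\<^sup>+ s. ennreal (g s * measure \<mu> {s}) \<partial>count_space J)"
proof -
  have eq: "ennreal (indicator J x * g x) = (\<integral>\<^sup>+ s. ennreal (g s) * indicator {s} x \<partial>count_space J)" for x
  proof (cases "x \<in> J")
    case True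
    have "(\<integral>\<^sup>+ s. ennreal (g s) * indicator {s} x \<partial>count_space J) = (\<integral>\<^sup>+ s. ennreal (g x) * indicator {x} s \<partial>count_space J)"
      by (rule nn_integral_cong) (auto split: split_indicator)
    also have "\<dots> = ennreal (g x) * emeasure (count_space J) {x}"
      using True by (subst nn_integral_cmult_indicator) auto
    also have "\<dots> = ennreal (g x)" using True by simp
    finally show ?thesis using True by simp
  next
    case False
    have "(\<integral>\<^sup>+ s. ennreal (g s) * indicator {s} x \<partial>count_space J) = (\<integral>\<^sup>+ s. 0 \<partial>count_space J)"
      by (rule nn_integral_cong) (use False in \<open>auto split: split_indicator\<close>)
    then show ?thesis using False by simp
  qed
  have "(\<integral>\<^sup>+ x. ennreal (indicator J x * g x) \<partial>\<mu>) = (\<integral>\<^sup>+ x. (\<integral>\<^sup>+ s. ennreal (g s) * indicator {s} x \<partial>count_space J) \<partial>\<mu>)"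
    by (simp add: eq)
  also have "\<dots> = (\<integral>\<^sup>+ s. (\<integral>\<^sup>+ x. ennreal (g s) * indicator {s} x \<partial>\<mu>) \<partial>count_space J)"
  proof (rule nn_integral_count_space_nn_integral[OF J])
    fix s assume "s \<in> J"
    have "{s} \<in> sets \<mu>" using sets by simp
    then show "(\<lambda>x. ennreal (g s) * indicator {s} x) \<in> borel_measurable \<mu>" by measurable
  qed
  also have "\<dots> = (\<integral>\<^sup>+ s. ennreal (g s * measure \<mu> {s}) \<partial>count_space J)"
  proof (rule nn_integral_cong)
    fix s assume "s \<in> space (count_space J)"
    then have s: "s \<in> J" by simp
    have "{s} \<in> sets \<mu>" using sets by simp
    then have "(\<integral>\<^sup>+ x. ennreal (g s) * indicator {s} x \<partial>\<mu>) = ennreal (g s) * emeasure \<mu> {s}"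
      by (rule nn_integral_cmult_indicator)
    also have "\<dots> = ennreal (g s * measure \<mu> {s})"
      using pos[OF s] finite_measure.emeasure_eq_measure[OF fm] by (simp add: ennreal_mult)
    finally show "(\<integral>\<^sup>+ x. ennreal (g s) * indicator {s} x \<partial>\<mu>) = ennreal (g s * measure \<mu> {s})" .
  qed
  finally show ?thesis .
qed

lemma atom_nn_real:
  fixes \<mu> :: "real measure"
  assumes fm: "finite_measure \<mu>" and sets: "sets \<mu> = sets borel" and J: "countable J"
    and pos: "\<And>s. s \<in> J \<Longrightarrow> 0 \<le> g s" and bnd: "\<And>s. s \<in> J \<Longrightarrow> g s \<le> K"
  shows "set_integrable \<mu> J g \<and> (\<lambda>s. g s * measure \<mu> {s}) summable_on J \<and>
         set_lebesgue_integral \<mu> J g = infsum (\<lambda>s. g s * measure \<mu> {s}) J"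
proof -
  have meas0: "(\<lambda>x. indicator J x * g x) \<in> borel_measurable borel"
    by (rule meas_countable_support, rule countable_subset[OF _ J]) (auto split: split_indicator)
  have meas: "(\<lambda>x. indicator J x * g x) \<in> borel_measurable \<mu>"
    using meas0 measurable_cong_sets[OF sets refl] by blast
  have Jsets: "J \<in> sets \<mu>" using sets J by (simp add: sets.countable)
  have int: "integrable \<mu> (\<lambda>x. indicator J x * g x)"
  proof (rule integrableI_bounded_set[where A=J and B=K])
    show "emeasure \<mu> J < \<infinity>" using finite_measure.emeasure_finite[OF fm] by (simp add: less_top[symmetric])
  qed (use Jsets meas pos bnd in \<open>auto split: split_indicator\<close>)
  then have si: "set_integrable \<mu> J g" unfolding set_integrable_def by simp
  have "set_lebesgue_integral \<mu> J g = enn2real (\<integral>\<^sup>+ x. ennreal (indicator J x * g x) \<partial>\<mu>)"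
    unfolding set_lebesgue_integral_def using meas pos
    by (simp add: integral_eq_nn_integral split: split_indicator)
  also have "\<dots> = enn2real (\<integral>\<^sup>+ s. ennreal (g s * measure \<mu> {s}) \<partial>count_space J)"
    using atom_nn_ennreal[OF fm sets J pos] by simp
  finally have e1: "set_lebesgue_integral \<mu> J g = enn2real (\<integral>\<^sup>+ s. ennreal (g s * measure \<mu> {s}) \<partial>count_space J)" .
  have fin: "(\<integral>\<^sup>+ s. ennreal (g s * measure \<mu> {s}) \<partial>count_space J) \<noteq> \<infinity>"
  proof -
    have "(\<integral>\<^sup>+ x. ennreal (norm (indicator J x * g x)) \<partial>\<mu>) < \<infinity>"
      using int by (simp add: integrable_iff_bounded)
    moreover have "(\<integral>\<^sup>+ x. ennreal (norm (indicator J x * g x)) \<partial>\<mu>) = (\<integral>\<^sup>+ x. ennreal (indicator J x * g x) \<partial>\<mu>)"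
      by (rule nn_integral_cong) (use pos in \<open>auto split: split_indicator\<close>)
    ultimately show ?thesis using atom_nn_ennreal[OF fm sets J pos] by simp
  qed
  have hpos: "\<And>s. s \<in> J \<Longrightarrow> 0 \<le> g s * measure \<mu> {s}" using pos by simp
  have abs: "Infinite_Set_Sum.abs_summable_on (\<lambda>s. g s * measure \<mu> {s}) J"
    unfolding abs_summable_on_def
    by (rule integrableI_nonneg) (use fin hpos in \<open>auto simp: AE_count_space less_top\<close>)
  have "infsetsum (\<lambda>s. g s * measure \<mu> {s}) J = enn2real (\<integral>\<^sup>+ s. ennreal (g s * measure \<mu> {s}) \<partial>count_space J)"
    by (rule infsetsum_conv_nn_integral[OF fin hpos])
  moreover have "infsetsum (\<lambda>s. g s * measure \<mu> {s}) J = infsum (\<lambda>s. g s * measure \<mu> {s}) J"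
    by (rule infsetsum_infsum[OF abs])
  moreover have "(\<lambda>s. g s * measure \<mu> {s}) summable_on J"
    using abs abs_summable_equivalent abs_summable_summable by blast
  ultimately show ?thesis using si e1 by simp
qed


lemma summable_on_diff:
  fixes f g :: "'a \<Rightarrow> real"
  assumes "f summable_on A" "g summable_on A"
  shows "(\<lambda>x. f x - g x) summable_on A"
  using summable_on_add[OF assms(1) summable_on_uminus[THEN iffD2, OF assms(2)]] by simp

lemma infsum_diff:
  fixes f g :: "'a \<Rightarrow> real"
  assumes "f summable_on A" "g summable_on A"
  shows "infsum (\<lambda>x. f x - g x) A = infsum f A - infsum g A"
  using infsum_add[OF assms(1) summable_on_uminus[THEN iffD2, OF assms(2)]] infsum_uminus[of g A] by simp

lemma atom_real:
  fixes \<mu> :: "real measure"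
  assumes fm: "finite_measure \<mu>" and sets: "sets \<mu> = sets borel" and J: "countable J"
    and bnd: "\<And>s. s \<in> J \<Longrightarrow> \<bar>g s\<bar> \<le> K"
  shows "set_integrable \<mu> J g \<and> (\<lambda>s. g s * measure \<mu> {s}) summable_on J \<and>
         set_lebesgue_integral \<mu> J g = infsum (\<lambda>s. g s * measure \<mu> {s}) J"
proof -
  have A: "set_integrable \<mu> J (\<lambda>s. g s + \<bar>K\<bar>) \<and> (\<lambda>s. (g s + \<bar>K\<bar>) * measure \<mu> {s}) summable_on J \<and>
         set_lebesgue_integral \<mu> J (\<lambda>s. g s + \<bar>K\<bar>) = infsum (\<lambda>s. (g s + \<bar>K\<bar>) * measure \<mu> {s}) J"
    by (rule atom_nn_real[OF fm sets J, where K="2*\<bar>K\<bar>"]) (use bnd in \<open>fastforce simp: abs_le_iff\<close>)+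
  have B: "set_integrable \<mu> J (\<lambda>s. \<bar>K\<bar>) \<and> (\<lambda>s. \<bar>K\<bar> * measure \<mu> {s}) summable_on J \<and>
         set_lebesgue_integral \<mu> J (\<lambda>s. \<bar>K\<bar>) = infsum (\<lambda>s. \<bar>K\<bar> * measure \<mu> {s}) J"
    by (rule atom_nn_real[OF fm sets J, where K="\<bar>K\<bar>"]) auto
  have eqf: "g = (\<lambda>s. (g s + \<bar>K\<bar>) - \<bar>K\<bar>)" by simp
  have eqh: "(\<lambda>s. g s * measure \<mu> {s}) = (\<lambda>s. (g s + \<bar>K\<bar>) * measure \<mu> {s} - \<bar>K\<bar> * measure \<mu> {s})"
    by (simp add: algebra_simps)
  have i1: "set_integrable \<mu> J g"
    using set_integral_diff(1)[of \<mu> J "\<lambda>s. g s + \<bar>K\<bar>" "\<lambda>s. \<bar>K\<bar>"] A B by simp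
  have s1: "(\<lambda>s. g s * measure \<mu> {s}) summable_on J"
    unfolding eqh using summable_on_diff[of "\<lambda>s. (g s + \<bar>K\<bar>) * measure \<mu> {s}" J "\<lambda>s. \<bar>K\<bar> * measure \<mu> {s}"] A B by simp
  have "set_lebesgue_integral \<mu> J g = set_lebesgue_integral \<mu> J (\<lambda>s. g s + \<bar>K\<bar>) - set_lebesgue_integral \<mu> J (\<lambda>s. \<bar>K\<bar>)"
    using set_integral_diff(2)[of \<mu> J "\<lambda>s. g s + \<bar>K\<bar>" "\<lambda>s. \<bar>K\<bar>"] A B by simp
  also have "\<dots> = infsum (\<lambda>s. (g s + \<bar>K\<bar>) * measure \<mu> {s}) J - infsum (\<lambda>s. \<bar>K\<bar> * measure \<mu> {s}) J"
    using A B by simp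
  also have "\<dots> = infsum (\<lambda>s. g s * measure \<mu> {s}) J"
    unfolding eqh using infsum_diff[of "\<lambda>s. (g s + \<bar>K\<bar>) * measure \<mu> {s}" J "\<lambda>s. \<bar>K\<bar> * measure \<mu> {s}"] A B by simp
  finally show ?thesis using i1 s1 by simp
qed

lemma lft_eq: "(f \<longlongrightarrow> l) (at_left (s::real)) \<Longrightarrow> lft f s = l"
  unfolding lft_def by (rule tendsto_Lim) (auto simp: trivial_limit_at_left_real)

lemma rgt_eq: "(f \<longlongrightarrow> l) (at_right (s::real)) \<Longrightarrow> rgt f s = l"
  unfolding rgt_def by (rule tendsto_Lim) (auto simp: trivial_limit_at_right_real)

lemma lft_tendsto:
  assumes "\<exists>l. (f \<longlongrightarrow> l) (at_left (s::real))"
  shows "(f \<longlongrightarrow> lft f s) (at_left s)"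
  using assms lft_eq by metis

lemma rgt_tendsto:
  assumes "\<exists>l. (f \<longlongrightarrow> l) (at_right (s::real))"
  shows "(f \<longlongrightarrow> rgt f s) (at_right s)"
  using assms rgt_eq by metis

lemma seq_left:
  fixes s :: real
  shows "filterlim (\<lambda>n. (real_of_int \<lceil>real (Suc n) * s\<rceil> - 1) / real (Suc n)) (at_left s) sequentially"
proof (rule tendsto_imp_filterlim_at_left)
  let ?x = "\<lambda>n. (real_of_int \<lceil>real (Suc n) * s\<rceil> - 1) / real (Suc n)"
  have lt: "?x n < s" for n
  proof -
    have "real_of_int \<lceil>real (Suc n) * s\<rceil> - 1 < real (Suc n) * s" by linarith
    then show ?thesis by (simp add: divide_less_eq mult.commute)
  qed
  have ge: "s - 1 / real (Suc n) \<le> ?x n" for n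
  proof -
    have "real (Suc n) * s - 1 \<le> real_of_int \<lceil>real (Suc n) * s\<rceil> - 1" by linarith
    then show ?thesis by (simp add: le_divide_eq diff_divide_distrib mult.commute)
  qed
  have "(\<lambda>n. s - 1 / real (Suc n)) \<longlonglongrightarrow> s - 0"
    by (intro tendsto_intros LIMSEQ_Suc[OF lim_inverse_n'] ) 
  then have l: "(\<lambda>n. s - 1 / real (Suc n)) \<longlonglongrightarrow> s" by simp
  show "?x \<longlonglongrightarrow> s"
    by (rule tendsto_sandwich[OF _ _ l tendsto_const]) (use lt ge in \<open>auto intro!: always_eventually less_imp_le\<close>)
  show "\<forall>\<^sub>F n in sequentially. ?x n < s" using lt by simp
qed

lemma seq_right:
  fixes s :: real
  shows "filterlim (\<lambda>n. (real_of_int \<lfloor>real (Suc n) * s\<rfloor> + 1) / real (Suc n)) (at_right s) sequentially"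
proof (rule tendsto_imp_filterlim_at_right)
  let ?x = "\<lambda>n. (real_of_int \<lfloor>real (Suc n) * s\<rfloor> + 1) / real (Suc n)"
  have gt: "s < ?x n" for n
  proof -
    have "real (Suc n) * s < real_of_int \<lfloor>real (Suc n) * s\<rfloor> + 1" by linarith
    then show ?thesis by (simp add: less_divide_eq mult.commute)
  qed
  have le: "?x n \<le> s + 1 / real (Suc n)" for n
  proof -
    have "real_of_int \<lfloor>real (Suc n) * s\<rfloor> + 1 \<le> real (Suc n) * s + 1" by linarith
    then show ?thesis by (simp add: divide_le_eq add_divide_distrib mult.commute)
  qed
  have "(\<lambda>n. s + 1 / real (Suc n)) \<longlonglongrightarrow> s + 0"
    by (intro tendsto_intros LIMSEQ_Suc[OF lim_inverse_n'] ) 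
  then have l: "(\<lambda>n. s + 1 / real (Suc n)) \<longlonglongrightarrow> s" by simp
  show "?x \<longlonglongrightarrow> s"
    by (rule tendsto_sandwich[OF _ _ tendsto_const l]) (use gt le in \<open>auto intro!: always_eventually less_imp_le\<close>)
  show "\<forall>\<^sub>F n in sequentially. s < ?x n" using gt by simp
qed

lemma meas_left:
  fixes f :: "real \<Rightarrow> real"
  assumes lim: "\<forall>s\<in>{0<..t}. \<exists>l. (f \<longlongrightarrow> l) (at_left s)"
  shows "(\<lambda>s. indicator {0<..t} s * lft f s) \<in> borel_measurable borel"
proof (rule borel_measurable_LIMSEQ_real)
  let ?x = "\<lambda>n s. (real_of_int \<lceil>real (Suc n) * s\<rceil> - 1) / real (Suc n)"
  show "(\<lambda>n. indicator {0<..t} s * f (?x n s)) \<longlonglongrightarrow> indicator {0<..t} s * lft f s" for s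
  proof (cases "s \<in> {0<..t}")
    case True
    have "(\<lambda>n. f (?x n s)) \<longlonglongrightarrow> lft f s"
      using filterlim_compose[OF lft_tendsto[OF lim[rule_format, OF True]] seq_left] .
    then show ?thesis using True by simp
  qed simp
  show "(\<lambda>s. indicator {0<..t} s * f (?x n s)) \<in> borel_measurable borel" for n
  proof -
    have "(\<lambda>s. (\<lambda>k::int. \<lambda>s. indicator {0<..t} s * f ((real_of_int k - 1) / real (Suc n))) \<lceil>real (Suc n) * s\<rceil> s)
          \<in> borel_measurable borel"
      by (rule measurable_compose_countable'[where I=UNIV]) (auto intro: measurable_compose[OF _ measurable_real_ceiling])
    then show ?thesis by simp
  qed
qed

lemma meas_right:
  fixes f :: "real \<Rightarrow> real"
  assumes lim: "\<forall>s\<in>{0..<t}. continuous (at_right s) f"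
  shows "(\<lambda>s. indicator {0..<t} s * f s) \<in> borel_measurable borel"
proof (rule borel_measurable_LIMSEQ_real)
  let ?x = "\<lambda>n s. (real_of_int \<lfloor>real (Suc n) * s\<rfloor> + 1) / real (Suc n)"
  show "(\<lambda>n. indicator {0..<t} s * f (?x n s)) \<longlonglongrightarrow> indicator {0..<t} s * f s" for s
  proof (cases "s \<in> {0..<t}")
    case True
    have "(f \<longlongrightarrow> f s) (at_right s)" using lim True by (simp add: continuous_within)
    from filterlim_compose[OF this seq_right]
    have "(\<lambda>n. f (?x n s)) \<longlonglongrightarrow> f s" .
    then show ?thesis using True by simp
  qed simp
  show "(\<lambda>s. indicator {0..<t} s * f (?x n s)) \<in> borel_measurable borel" for n
  proof -
    have "(\<lambda>s. (\<lambda>k::int. \<lambda>s. indicator {0..<t} s * f ((real_of_int k + 1) / real (Suc n))) \<lfloor>real (Suc n) * s\<rfloor> s)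
          \<in> borel_measurable borel"
      by (rule measurable_compose_countable'[where I=UNIV]) (auto intro: measurable_compose[OF _ measurable_real_floor])
    then show ?thesis by simp
  qed
qed


lemma im_finite:
  fixes F :: "real \<Rightarrow> real"
  assumes mono: "\<And>x y. x \<le> y \<Longrightarrow> F x \<le> F y" and rc: "\<And>a. continuous (at_right a) F"
    and bnd: "\<And>x. lo \<le> F x \<and> F x \<le> hi"
  shows "finite_measure (interval_measure F)"
proof (rule finite_measureI)
  let ?A = "\<lambda>n::nat. {- real n <.. real n}"
  have inc: "incseq ?A" by (auto simp: incseq_def)
  have un: "(\<Union>n. ?A n) = UNIV"
  proof safe
    fix x :: real
    obtain n :: nat where "\<bar>x\<bar> < real n" using reals_Archimedean2 by blast
    then show "x \<in> (\<Union>n. ?A n)" by (intro UN_I[of n]) auto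
  qed auto
  have "emeasure (interval_measure F) (\<Union>n. ?A n) = (SUP n. emeasure (interval_measure F) (?A n))"
    by (rule SUP_emeasure_incseq[symmetric]) (use inc in auto)
  also have "\<dots> \<le> ennreal (hi - lo)"
  proof (rule SUP_least)
    fix n
    have "emeasure (interval_measure F) (?A n) = ennreal (F (real n) - F (- real n))"
      by (rule emeasure_interval_measure_Ioc) (auto intro: mono rc)
    also have "\<dots> \<le> ennreal (hi - lo)"
      using bnd[of "real n"] bnd[of "- real n"] by (intro ennreal_leI) linarith
    finally show "emeasure (interval_measure F) (?A n) \<le> ennreal (hi - lo)" .
  qed
  finally show "emeasure (interval_measure F) (space (interval_measure F)) \<noteq> \<infinity>"
    using un by (auto simp: top_unique)
qed

lemma im_singleton:
  fixes F :: "real \<Rightarrow> real"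
  assumes mono: "\<And>x y. x \<le> y \<Longrightarrow> F x \<le> F y" and rc: "\<And>a. continuous (at_right a) F"
    and fm: "finite_measure (interval_measure F)"
    and lim: "(F \<longlongrightarrow> l) (at_left s)"
  shows "measure (interval_measure F) {s} = F s - l"
proof -
  let ?A = "\<lambda>n::nat. {s - 1 / real (Suc n) <.. s}"
  have sub: "?A n \<subseteq> ?A m" if "m \<le> n" for m n :: nat
  proof
    fix x assume x: "x \<in> ?A n"
    have "1 / real (Suc n) \<le> 1 / real (Suc m)" using that by (simp add: frac_le)
    with x show "x \<in> ?A m" by force
  qed
  have dec: "antimono_on UNIV ?A"
    by (rule antimonoI) (use sub in auto)
  have int: "(\<Inter>n. ?A n) = {s}"
  proof safe
    fix x assume x: "x \<in> (\<Inter>n. ?A n)"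
    then have le: "x \<le> s" by auto
    have "\<forall>n. s - 1 / real (Suc n) < x" using x by auto
    have L: "(\<lambda>n. s - 1 / real (Suc n)) \<longlonglongrightarrow> s - 0"
      by (intro tendsto_intros LIMSEQ_Suc[OF lim_inverse_n'])
    have "s - 0 \<le> x"
      by (rule LIMSEQ_le_const2[OF L]) (use \<open>\<forall>n. s - 1 / real (Suc n) < x\<close> in \<open>auto intro: less_imp_le\<close>)
    then show "x = s" using le by simp
  qed auto
  have "(\<lambda>n. measure (interval_measure F) (?A n)) \<longlonglongrightarrow> measure (interval_measure F) (\<Inter>n. ?A n)"
    by (rule finite_measure.finite_Lim_measure_decseq[OF fm _ dec]) auto
  then have L1: "(\<lambda>n. measure (interval_measure F) (?A n)) \<longlonglongrightarrow> measure (interval_measure F) {s}"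
    using int by simp
  have eq: "measure (interval_measure F) (?A n) = F s - F (s - 1 / real (Suc n))" for n
    by (rule measure_interval_measure_Ioc) (auto intro: mono rc)
  have seq: "filterlim (\<lambda>n. s - 1 / real (Suc n)) (at_left s) sequentially"
  proof (rule tendsto_imp_filterlim_at_left)
    have "(\<lambda>n. s - 1 / real (Suc n)) \<longlonglongrightarrow> s - 0"
      by (intro tendsto_intros LIMSEQ_Suc[OF lim_inverse_n'])
    then show "(\<lambda>n. s - 1 / real (Suc n)) \<longlonglongrightarrow> s" by simp
  qed auto
  have "(\<lambda>n. F s - F (s - 1 / real (Suc n))) \<longlonglongrightarrow> F s - l"
    by (intro tendsto_intros filterlim_compose[OF lim seq])
  with L1 show ?thesis unfolding eq using LIMSEQ_unique by blast
qed

lemma atoms_summable: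
  fixes \<mu> :: "real measure"
  assumes fm: "finite_measure \<mu>" and sets: "sets \<mu> = sets borel"
  shows "(\<lambda>s. measure \<mu> {s}) summable_on A"
proof (rule nonneg_bdd_above_summable_on)
  show "bdd_above (sum (\<lambda>s. measure \<mu> {s}) ` {F. F \<subseteq> A \<and> finite F})"
  proof (rule bdd_aboveI)
    fix x assume "x \<in> sum (\<lambda>s. measure \<mu> {s}) ` {F. F \<subseteq> A \<and> finite F}"
    then obtain G where G: "finite G" "x = sum (\<lambda>s. measure \<mu> {s}) G" by auto
    then have "x = measure \<mu> G"
      using finite_measure.finite_measure_eq_sum_singleton[OF fm G(1)] sets by simp
    then show "x \<le> measure \<mu> (space \<mu>)" using finite_measure.bounded_measure[OF fm] by simp
  qed
qed auto


lemma C2_deriv: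
  assumes "C2_fun f"
  shows "(f has_real_derivative deriv f y) (at y)" "isCont (deriv f) y"
proof -
  show "(f has_real_derivative deriv f y) (at y)"
    using assms unfolding C2_fun_def by (simp add: DERIV_deriv_iff_real_differentiable)
  show "isCont (deriv f) y"
    using assms unfolding C2_fun_def by (simp add: differentiable_imp_continuous_within)
qed

lemma Mp_eq:
  assumes "C2_fun (A t)" "C2_fun (B t)"
  shows "Mp A B t y = (deriv (A t) y + deriv (B t) y) / 2"
proof -
  have "((\<lambda>z. A t z + B t z) has_real_derivative (deriv (A t) y + deriv (B t) y)) (at y)"
    by (rule DERIV_add[OF C2_deriv(1)[OF assms(1)] C2_deriv(1)[OF assms(2)]])
  then have "((\<lambda>z. (A t z + B t z) / 2) has_real_derivative (deriv (A t) y + deriv (B t) y) / 2) (at y)"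
    by (rule DERIV_cdivide)
  then show ?thesis unfolding Mp_def by (rule DERIV_imp_deriv)
qed

lemma Pp_eq:
  assumes "C2_fun (A t)" "C2_fun (B t)"
  shows "Pp A B t y = deriv (A t) y - deriv (B t) y"
proof -
  have "((\<lambda>z. A t z - B t z) has_real_derivative deriv (A t) y - deriv (B t) y) (at y)"
    by (rule DERIV_diff[OF C2_deriv(1)[OF assms(1)] C2_deriv(1)[OF assms(2)]])
  then show ?thesis unfolding Pp_def by (rule DERIV_imp_deriv)
qed

lemma sign_ok:
  assumes C2: "C2_fun (A t)" "C2_fun (B t)"
    and st: "\<forall>y. Mp A B t y > - (1/2) * sgn y * Pp A B t y"
    and y: "y \<noteq> 0"
  shows "0 \<le> Mp A B t 0 + (1/2) * sgn y * Pp A B t 0"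
proof -
  let ?h = "\<lambda>x. Mp A B t x + (1/2) * sgn y * Pp A B t x"
  have h: "?h = (\<lambda>x. (deriv (A t) x + deriv (B t) x) / 2 + (1/2) * sgn y * (deriv (A t) x - deriv (B t) x))"
    using Mp_eq[where A=A and B=B and t=t, OF C2] Pp_eq[where A=A and B=B and t=t, OF C2] by auto
  have c: "isCont ?h 0"
    unfolding h by (intro continuous_intros C2_deriv(2)[OF C2(1)] C2_deriv(2)[OF C2(2)]) auto
  show ?thesis
  proof (cases "y > 0")
    case True
    have "(?h \<longlongrightarrow> ?h 0) (at_right 0)" using c by (simp add: isCont_def filterlim_at_split)
    moreover have "\<forall>\<^sub>F x in at_right 0. 0 \<le> ?h x"
      using eventually_at_right_less[of "0::real"]
    proof (rule eventually_mono)
      fix x :: real assume "0 < x"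
      then show "0 \<le> ?h x" using st[rule_format, of x] True by simp
    qed
    ultimately show ?thesis
      by (intro tendsto_lowerbound[where F="at_right 0" and f="?h"]) auto
  next
    case False
    with y have neg: "y < 0" by simp
    have "(?h \<longlongrightarrow> ?h 0) (at_left 0)" using c by (simp add: isCont_def filterlim_at_split)
    moreover have "\<forall>\<^sub>F x in at_left 0. 0 \<le> ?h x"
      using eventually_at_left[of "-1" "0::real", THEN iffD2, OF _ exI[of _ "-1"]]
    proof (rule eventually_mono)
      fix x :: real assume "-1 < x \<and> x < 0"
      then show "0 \<le> ?h x" using st[rule_format, of x] neg by simp
    qed auto
    ultimately show ?thesis
      by (intro tendsto_lowerbound[where F="at_left 0" and f="?h"]) auto
  qed
qed

lemma price_bounds:
  assumes "price_ok T A" "price_ok T B"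
  shows "\<exists>K. \<forall>t\<in>{0..T}. \<forall>y. \<bar>y\<bar> \<le> R \<longrightarrow> \<bar>Mp A B t y\<bar> \<le> K \<and> \<bar>Pp A B t y\<bar> \<le> K"
proof -
  obtain KA where KA: "\<forall>t\<in>{0..T}. \<forall>y. \<bar>y\<bar> \<le> R \<longrightarrow> \<bar>deriv (A t) y\<bar> \<le> KA"
    using assms(1) unfolding price_ok_def by blast
  obtain KB where KB: "\<forall>t\<in>{0..T}. \<forall>y. \<bar>y\<bar> \<le> R \<longrightarrow> \<bar>deriv (B t) y\<bar> \<le> KB"
    using assms(2) unfolding price_ok_def by blast
  have C2: "C2_fun (A t)" "C2_fun (B t)" if "t \<in> {0..T}" for t
    using assms that unfolding price_ok_def by auto
  show ?thesis
  proof (intro exI[of _ "KA + KB"] ballI allI impI conjI)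
    fix t y assume t: "t \<in> {0..T}" and y: "\<bar>y\<bar> \<le> R"
    have a: "\<bar>deriv (A t) y\<bar> \<le> KA" and b: "\<bar>deriv (B t) y\<bar> \<le> KB" using KA KB t y by auto
    show "\<bar>Mp A B t y\<bar> \<le> KA + KB" unfolding Mp_eq[where A=A and B=B and t=t, OF C2[OF t]] using a b by (simp add: abs_le_iff)
    show "\<bar>Pp A B t y\<bar> \<le> KA + KB" unfolding Pp_eq[where A=A and B=B and t=t, OF C2[OF t]] using a b by (simp add: abs_le_iff)
  qed
qed

lemma cadlag_combo:
  assumes f: "cadlag_on T f" and g: "cadlag_on T g" and h: "\<And>t. t \<in> {0..T} \<Longrightarrow> h t = a * f t + b * g t"
  shows "cadlag_on T h"
  unfolding cadlag_on_def
proof (intro conjI ballI)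
  fix s assume s: "s \<in> {0..<T}"
  have sT: "s < T" using s by simp
  have "(f \<longlongrightarrow> f s) (at_right s)" "(g \<longlongrightarrow> g s) (at_right s)"
    using f g s unfolding cadlag_on_def by (auto simp: continuous_within)
  then have L: "((\<lambda>t. a * f t + b * g t) \<longlongrightarrow> a * f s + b * g s) (at_right s)"
    by (intro tendsto_intros)
  have ev: "\<forall>\<^sub>F t in at_right s. a * f t + b * g t = h t"
    unfolding eventually_at_right[of s T, OF sT]
    using s by (intro exI[of _ T]) (auto simp: h)
  have "(h \<longlongrightarrow> h s) (at_right s)"
    using tendsto_cong[OF ev] L h[of s] s by auto
  then show "continuous (at_right s) h" by (simp add: continuous_within)
next
  fix s assume s: "s \<in> {0<..T}"
  obtain l1 l2 where "(f \<longlongrightarrow> l1) (at_left s)" "(g \<longlongrightarrow> l2) (at_left s)"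
    using f g s unfolding cadlag_on_def by blast
  then have L: "((\<lambda>t. a * f t + b * g t) \<longlongrightarrow> a * l1 + b * l2) (at_left s)"
    by (intro tendsto_intros)
  have s0: "0 < s" using s by simp
  have ev: "\<forall>\<^sub>F t in at_left s. a * f t + b * g t = h t"
    unfolding eventually_at_left[OF s0]
    using s by (intro exI[of _ 0]) (auto simp: h)
  show "\<exists>l. (h \<longlongrightarrow> l) (at_left s)"
    using tendsto_cong[OF ev] L by auto
qed

lemma lft_bound:
  assumes s: "s \<in> {0<..T}" and lim: "\<exists>l. (f \<longlongrightarrow> l) (at_left s)"
    and b: "\<And>t. t \<in> {0..T} \<Longrightarrow> \<bar>f t\<bar> \<le> K"
  shows "\<bar>lft f s\<bar> \<le> K"
proof -
  have s0: "0 < s" using s by simp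
  have "((\<lambda>t. \<bar>f t\<bar>) \<longlongrightarrow> \<bar>lft f s\<bar>) (at_left s)"
    by (intro tendsto_intros lft_tendsto[OF lim])
  moreover have "\<forall>\<^sub>F t in at_left s. \<bar>f t\<bar> \<le> K"
    unfolding eventually_at_left[OF s0] using s b by (intro exI[of _ 0]) auto
  ultimately show ?thesis
    by (intro tendsto_upperbound[where F="at_left s"]) auto
qed

lemma lft_nonneg:
  assumes s: "s \<in> {0<..T}" and lim: "\<exists>l. (f \<longlongrightarrow> l) (at_left s)"
    and b: "\<And>t. t \<in> {0..T} \<Longrightarrow> 0 \<le> f t"
  shows "0 \<le> lft f s"
proof -
  have s0: "0 < s" using s by simp
  have "(f \<longlongrightarrow> lft f s) (at_left s)"
    by (rule lft_tendsto[OF lim])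
  moreover have "\<forall>\<^sub>F t in at_left s. 0 \<le> f t"
    unfolding eventually_at_left[OF s0] using s b by (intro exI[of _ 0]) auto
  ultimately show ?thesis
    by (intro tendsto_lowerbound[where F="at_left s"]) auto
qed


lemma qext_in: "x \<in> {0..T} \<Longrightarrow> qext T q x = q x"
  unfolding qext_def by simp

lemma qext_mono:
  assumes "mono_on {0..T} q" "0 \<le> T" "x \<le> y"
  shows "qext T q x \<le> qext T q y"
  unfolding qext_def by (rule mono_onD[OF assms(1)]) (use assms in auto)

lemma qext_bnd:
  assumes "mono_on {0..T} q" "0 \<le> T"
  shows "q 0 \<le> qext T q x \<and> qext T q x \<le> q T"
  unfolding qext_def using assms by (auto intro!: mono_onD[OF assms(1)])

lemma qext_left0:
  assumes "x < 0" "0 \<le> T"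
  shows "\<forall>\<^sub>F y in at_right x. qext T q y = q 0"
  unfolding eventually_at_right[OF assms(1)] using assms
  by (intro exI[of _ 0]) (auto simp: qext_def)

lemma qext_rightT:
  assumes "T \<le> x" "0 \<le> T"
  shows "\<forall>\<^sub>F y in at_right x. qext T q y = q T"
  using eventually_at_right_less[of x] by (rule eventually_mono) (use assms in \<open>auto simp: qext_def\<close>)

lemma qext_mid_right:
  assumes "x \<in> {0..<T}"
  shows "\<forall>\<^sub>F y in at_right x. qext T q y = q y"
proof -
  have xT: "x < T" using assms by simp
  show ?thesis unfolding eventually_at_right[OF xT] using assms
    by (intro exI[of _ T]) (auto simp: qext_def)
qed

lemma qext_mid_left:
  assumes "s \<in> {0<..T}"
  shows "\<forall>\<^sub>F y in at_left s. qext T q y = q y"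
proof -
  have s0: "0 < s" using assms by simp
  show ?thesis unfolding eventually_at_left[OF s0] using assms
    by (intro exI[of _ 0]) (auto simp: qext_def)
qed

lemma LS_cadlag:
  assumes T: "T > 0" and qv: "qv_cadlag T Z q"
  shows "finite_measure (LS T q) \<and> sets (LS T q) = sets borel \<and>
         (\<forall>s\<in>{0<..T}. measure (LS T q) {s} = (Z s - lft Z s)\<^sup>2)"
proof -
  have mono: "mono_on {0..T} q" and rq: "\<forall>s\<in>{0..<T}. continuous (at_right s) q"
    and lq: "\<forall>s\<in>{0<..T}. (q \<longlongrightarrow> q s - (Z s - lft Z s)\<^sup>2) (at_left s)"
    using qv unfolding qv_cadlag_def by auto
  have rc: "(qext T q \<longlongrightarrow> qext T q x) (at_right x)" for x
  proof -
    consider "x < 0" | "x \<in> {0..<T}" | "T \<le> x" by fastforce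
    then show ?thesis
    proof cases
      case 1
      have "((\<lambda>y. q 0) \<longlongrightarrow> q 0) (at_right x)" by simp
      then have "(qext T q \<longlongrightarrow> q 0) (at_right x)"
        using tendsto_cong[OF qext_left0[OF 1, of T q]] T by simp
      then show ?thesis using 1 T by (simp add: qext_def)
    next
      case 2
      have "(q \<longlongrightarrow> q x) (at_right x)" using rq 2 by (simp add: continuous_within)
      then have "(qext T q \<longlongrightarrow> q x) (at_right x)"
        using tendsto_cong[OF qext_mid_right[OF 2, of q]] by simp
      then show ?thesis using 2 by (simp add: qext_in)
    next
      case 3
      have "((\<lambda>y. q T) \<longlongrightarrow> q T) (at_right x)" by simp
      then have "(qext T q \<longlongrightarrow> q T) (at_right x)"
        using tendsto_cong[OF qext_rightT[OF 3, of q]] T by simp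
      then show ?thesis using 3 T by (simp add: qext_def)
    qed
  qed
  have F: "rgt (qext T q) = qext T q"
    by (rule ext, rule rgt_eq[OF rc])
  have LS: "LS T q = interval_measure (qext T q)" unfolding LS_def F ..
  have m: "\<And>x y. x \<le> y \<Longrightarrow> qext T q x \<le> qext T q y" using qext_mono[OF mono] T by simp
  have c: "\<And>a. continuous (at_right a) (qext T q)" using rc by (simp add: continuous_within)
  have fm: "finite_measure (LS T q)"
    unfolding LS by (rule im_finite[OF m c, of "q 0" "q T"]) (use qext_bnd[OF mono] T in auto)
  have "measure (LS T q) {s} = (Z s - lft Z s)\<^sup>2" if s: "s \<in> {0<..T}" for s
  proof -
    have "(qext T q \<longlongrightarrow> q s - (Z s - lft Z s)\<^sup>2) (at_left s)"
      using tendsto_cong[OF qext_mid_left[OF s, of q]] lq s by simp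
    from im_singleton[OF m c fm[unfolded LS] this]
    show ?thesis unfolding LS using s by (simp add: qext_in)
  qed
  then show ?thesis using fm by (simp add: LS_def)
qed


lemma LS_caglad:
  assumes T: "T > 0" and qv: "qv_caglad T Z q"
  shows "finite_measure (LS T q) \<and> sets (LS T q) = sets borel \<and>
         (\<forall>s\<in>{0..<T}. measure (LS T q) {s} = (rgt Z s - Z s)\<^sup>2)"
proof -
  have mono: "mono_on {0..T} q" and lq: "\<forall>s\<in>{0<..T}. continuous (at_left s) q"
    and rq: "\<forall>s\<in>{0..<T}. (q \<longlongrightarrow> q s + (rgt Z s - Z s)\<^sup>2) (at_right s)"
    using qv unfolding qv_caglad_def by auto
  define L where "L s = q s + (rgt Z s - Z s)\<^sup>2" for s
  define F where "F = rgt (qext T q)"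
  have qm: "\<And>x y. x \<in> {0..T} \<Longrightarrow> y \<in> {0..T} \<Longrightarrow> x \<le> y \<Longrightarrow> q x \<le> q y"
    using mono by (auto intro: mono_onD)
  have F1: "F x = q 0" if "x < 0" for x
    unfolding F_def by (rule rgt_eq) (use tendsto_cong[OF qext_left0[OF that, of T q]] T in simp)
  have F2: "F x = q T" if "T \<le> x" for x
    unfolding F_def by (rule rgt_eq) (use tendsto_cong[OF qext_rightT[OF that, of q]] T in simp)
  have rqL: "(q \<longlongrightarrow> L x) (at_right x)" if "x \<in> {0..<T}" for x
    using rq that unfolding L_def by simp
  have F3: "F x = L x" if "x \<in> {0..<T}" for x
    unfolding F_def by (rule rgt_eq) (use tendsto_cong[OF qext_mid_right[OF that, of q]] rqL[OF that] in simp)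
  have Lq: "q x \<le> L x \<and> L x \<le> q y" if x: "x \<in> {0..<T}" and y: "y \<in> {x<..T}" for x y
  proof
    have xT: "x < T" and xy: "x < y" using x y by auto
    show "q x \<le> L x"
    proof (rule tendsto_lowerbound[OF rqL[OF x]])
      show "\<forall>\<^sub>F z in at_right x. q x \<le> q z"
        unfolding eventually_at_right[OF xT] using x by (intro exI[of _ T]) (auto intro: qm)
    qed simp
    show "L x \<le> q y"
    proof (rule tendsto_upperbound[OF rqL[OF x]])
      show "\<forall>\<^sub>F z in at_right x. q z \<le> q y"
        unfolding eventually_at_right[OF xy] using x y by (intro exI[of _ y]) (auto intro: qm)
    qed simp
  qed
  have Fb: "q 0 \<le> F x \<and> F x \<le> q T" for x
  proof -
    consider "x < 0" | "x \<in> {0..<T}" | "T \<le> x" by fastforce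
    then show ?thesis
    proof cases
      case 1 then show ?thesis using F1 T by (auto intro: qm)
    next
      case 2
      have "q 0 \<le> q x" using 2 T by (auto intro: qm)
      then show ?thesis using F3[OF 2] Lq[OF 2, of T] 2 by auto
    next
      case 3 then show ?thesis using F2 T by (auto intro: qm)
    qed
  qed
  have Fm: "F x \<le> F y" if xy: "x \<le> y" for x y
  proof -
    consider "x < 0" | "T \<le> y" | "x \<in> {0..<T}" "y \<in> {0..<T}" using xy by fastforce
    then show ?thesis
    proof cases
      case 1 then show ?thesis using F1 Fb by auto
    next
      case 2 then show ?thesis using F2 Fb by auto
    next
      case 3
      show ?thesis
      proof (cases "x = y")
        case False
        then have "x < y" using xy by simp
        then have "L x \<le> q y" using Lq[OF 3(1), of y] 3 by auto
        moreover have "q y \<le> L y" using Lq[OF 3(2), of T] 3 by auto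
        ultimately show ?thesis using F3 3 by auto
      qed simp
    qed
  qed
  have Frc: "(F \<longlongrightarrow> F a) (at_right a)" for a
  proof -
    consider "a < 0" | "T \<le> a" | "a \<in> {0..<T}" by fastforce
    then show ?thesis
    proof cases
      case 1
      have "\<forall>\<^sub>F y in at_right a. F y = q 0"
        unfolding eventually_at_right[OF 1] by (intro exI[of _ 0]) (auto intro: F1 1)
      then show ?thesis using F1[OF 1] by (simp add: tendsto_eventually)
    next
      case 2
      have "\<forall>\<^sub>F y in at_right a. F y = q T"
        using eventually_at_right_less[of a] by (rule eventually_mono) (use 2 F2 in auto)
      then show ?thesis using F2[OF 2] by (simp add: tendsto_eventually)
    next
      case 3
      have aT: "a < (a + T) / 2" using 3 by simp
      have lo: "(q \<longlongrightarrow> L a) (at_right a)" by (rule rqL[OF 3])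
      have fl: "filterlim (\<lambda>y. 2 * y - a) (at_right a) (at_right a)"
      proof (rule tendsto_imp_filterlim_at_right)
        have "((\<lambda>y. 2 * y - a) \<longlongrightarrow> 2 * a - a) (at_right a)" by (intro tendsto_intros)
        then show "((\<lambda>y. 2 * y - a) \<longlongrightarrow> a) (at_right a)" by simp
        show "\<forall>\<^sub>F y in at_right a. a < 2 * y - a"
          using eventually_at_right_less[of a] by (rule eventually_mono) simp
      qed
      have up: "((\<lambda>y. q (2 * y - a)) \<longlongrightarrow> L a) (at_right a)"
        using filterlim_compose[OF lo fl] .
      have ev: "\<forall>\<^sub>F y in at_right a. q y \<le> F y \<and> F y \<le> q (2 * y - a)"
        unfolding eventually_at_right[OF aT]
      proof (intro exI[of _ "(a + T) / 2"] conjI allI impI)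
        fix y assume y: "a < y" "y < (a + T) / 2"
        have y': "y \<in> {0..<T}" using y 3 by auto
        have "2 * y - a \<in> {y<..T}" using y 3 by auto
        then show "q y \<le> F y" "F y \<le> q (2 * y - a)" using Lq[OF y', of "2 * y - a"] F3[OF y'] by auto
      qed (use aT in simp)
      show ?thesis unfolding F3[OF 3]
        by (rule tendsto_sandwich[OF _ _ lo up]) (use ev in \<open>auto elim: eventually_mono\<close>)
    qed
  qed
  have Fleft: "(F \<longlongrightarrow> q s) (at_left s)" if s: "s \<in> {0..<T}" for s
  proof (cases "s = 0")
    case True
    have "\<forall>\<^sub>F y in at_left s. F y = q 0"
      unfolding True using eventually_at_left[of "-1" "0::real", THEN iffD2, OF _ exI[of _ "-1"]]
      by (rule eventually_mono) (auto intro: F1)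
    then show ?thesis using True by (simp add: tendsto_eventually)
  next
    case False
    then have s0: "0 < s" using s by simp
    have lo: "(q \<longlongrightarrow> q s) (at_left s)" using lq s s0 by (simp add: continuous_within)
    have ev: "\<forall>\<^sub>F y in at_left s. q y \<le> F y \<and> F y \<le> q s"
      unfolding eventually_at_left[OF s0]
    proof (intro exI[of _ 0] conjI allI impI)
      fix y assume y: "0 < y" "y < s"
      have y': "y \<in> {0..<T}" using y s by auto
      show "q y \<le> F y" "F y \<le> q s" using Lq[OF y', of s] F3[OF y'] y s by auto
    qed (use s0 in simp)
    show ?thesis
      by (rule tendsto_sandwich[OF _ _ lo tendsto_const]) (use ev in \<open>auto elim: eventually_mono\<close>)
  qed
  have LS: "LS T q = interval_measure F" unfolding LS_def F_def ..
  have c: "\<And>a. continuous (at_right a) F" using Frc by (simp add: continuous_within)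
  have fm: "finite_measure (LS T q)"
    unfolding LS by (rule im_finite[OF Fm c, of "q 0" "q T"]) (use Fb in auto)
  have "measure (LS T q) {s} = (rgt Z s - Z s)\<^sup>2" if s: "s \<in> {0..<T}" for s
  proof -
    from im_singleton[OF Fm c fm[unfolded LS] Fleft[OF s]]
    show ?thesis unfolding LS using s F3[OF s] by (simp add: L_def)
  qed
  then show ?thesis using fm by (simp add: LS_def)
qed


lemma final_mono:
  fixes \<mu> :: "real measure" and I :: "real \<Rightarrow> real set"
  assumes C: "\<And>t. t \<in> {0..T} \<Longrightarrow> C t = set_lebesgue_integral \<mu> (I t - J) g + infsum \<phi> (I t \<inter> J)"
    and Is: "\<And>t. t \<in> {0..T} \<Longrightarrow> I t \<in> sets \<mu>" and Js: "J \<in> sets \<mu>"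
    and Im: "\<And>t1 t2. t1 \<in> {0..T} \<Longrightarrow> t2 \<in> {0..T} \<Longrightarrow> t1 \<le> t2 \<Longrightarrow> I t1 \<subseteq> I t2"
    and gi: "set_integrable \<mu> (I T) g" and gp: "\<And>s. s \<in> I T - J \<Longrightarrow> 0 \<le> g s"
    and \<phi>s: "\<phi> summable_on (I T \<inter> J)" and \<phi>p: "\<And>s. s \<in> I T \<inter> J \<Longrightarrow> 0 \<le> \<phi> s"
    and T: "0 \<le> T"
  shows "nonneg_increasing T C"
proof -
  have sub: "I t \<subseteq> I T" if "t \<in> {0..T}" for t using Im[OF that] that T by auto
  have gi': "set_integrable \<mu> S g" if "S \<in> sets \<mu>" "S \<subseteq> I T" for S
    by (rule set_integrable_subset[OF gi that])
  have ip: "0 \<le> set_lebesgue_integral \<mu> S g" if "S \<in> sets \<mu>" "S \<subseteq> I T - J" for S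
  proof -
    have "set_lebesgue_integral \<mu> S (\<lambda>x. 0) \<le> set_lebesgue_integral \<mu> S g"
      by (rule set_integral_mono) (use gi'[of S] that gp in \<open>auto simp: set_integrable_def\<close>)
    then show ?thesis by (simp add: set_lebesgue_integral_def)
  qed
  have nn: "0 \<le> C t" if t: "t \<in> {0..T}" for t
  proof -
    have "0 \<le> set_lebesgue_integral \<mu> (I t - J) g"
      by (rule ip) (use Is[OF t] Js sub[OF t] in auto)
    moreover have "0 \<le> infsum \<phi> (I t \<inter> J)"
      by (rule infsum_nonneg) (use \<phi>p sub[OF t] in auto)
    ultimately show ?thesis using C[OF t] by simp
  qed
  have mo: "C t1 \<le> C t2" if t1: "t1 \<in> {0..T}" and t2: "t2 \<in> {0..T}" and le: "t1 \<le> t2" for t1 t2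
  proof -
    have s12: "I t1 \<subseteq> I t2" by (rule Im[OF t1 t2 le])
    have u: "I t2 - J = (I t1 - J) \<union> (I t2 - I t1 - J)" using s12 by auto
    have m1: "I t1 - J \<in> sets \<mu>" "I t2 - I t1 - J \<in> sets \<mu>" using Is[OF t1] Is[OF t2] Js by auto
    have "set_lebesgue_integral \<mu> (I t2 - J) g
          = set_lebesgue_integral \<mu> (I t1 - J) g + set_lebesgue_integral \<mu> (I t2 - I t1 - J) g"
      unfolding u
      by (rule set_integral_Un) (use m1 sub[OF t1] sub[OF t2] in \<open>auto intro!: gi'\<close>)
    moreover have "0 \<le> set_lebesgue_integral \<mu> (I t2 - I t1 - J) g"
      by (rule ip) (use m1 sub[OF t2] in auto)
    moreover have "infsum \<phi> (I t1 \<inter> J) \<le> infsum \<phi> (I t2 \<inter> J)"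
    proof (rule infsum_mono_neutral)
      show "\<phi> summable_on (I t1 \<inter> J)" by (rule summable_on_subset_banach[OF \<phi>s]) (use sub[OF t1] in auto)
      show "\<phi> summable_on (I t2 \<inter> J)" by (rule summable_on_subset_banach[OF \<phi>s]) (use sub[OF t2] in auto)
    qed (use s12 \<phi>p sub[OF t2] in auto)
    ultimately show ?thesis using C[OF t1] C[OF t2] by simp
  qed
  show ?thesis unfolding nonneg_increasing_def
    using nn mo by (auto simp: monotone_on_def)
qed


lemma abs_le_sq1: "\<bar>x::real\<bar> \<le> x\<^sup>2 + 1"
proof (cases "\<bar>x\<bar> \<le> 1")
  case True then show ?thesis by (simp add: add_increasing)
next
  case False
  then have "\<bar>x\<bar> * 1 \<le> \<bar>x\<bar> * \<bar>x\<bar>" by (intro mult_left_mono) auto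
  then show ?thesis by (simp add: power2_eq_square abs_mult[symmetric])
qed

lemma sgn_sq: "sgn (x::real) * x\<^sup>2 = \<bar>x\<bar> * x"
  by (cases "x < 0"; cases "x = 0") (auto simp: power2_eq_square sgn_if)

lemma phi_nonneg:
  assumes C2: "C2_fun (A t)" "C2_fun (B t)"
    and st: "\<forall>y. Mp A B t y > - (1/2) * sgn y * Pp A B t y"
  shows "0 \<le> d\<^sup>2 * (1/2 * (Mp A B t 0 + Mp A B t d) + 1/4 * sgn d * (Pp A B t 0 + Pp A B t d))"
proof (cases "d = 0")
  case False
  have a: "0 \<le> Mp A B t 0 + (1/2) * sgn d * Pp A B t 0" by (rule sign_ok[OF C2 st False])
  have b: "0 \<le> Mp A B t d + (1/2) * sgn d * Pp A B t d" using st[rule_format, of d] by simp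
  have "1/2 * (Mp A B t 0 + Mp A B t d) + 1/4 * sgn d * (Pp A B t 0 + Pp A B t d)
        = 1/2 * (Mp A B t 0 + (1/2) * sgn d * Pp A B t 0) + 1/2 * (Mp A B t d + (1/2) * sgn d * Pp A B t d)"
    by (simp add: algebra_simps)
  also have "\<dots> \<ge> 0" using a b by simp
  finally show ?thesis by simp
qed simp

lemma six_sum:
  fixes a1 a2 a3 a4 a5 a6 :: "'a \<Rightarrow> real"
  assumes "a1 summable_on A" "a2 summable_on A" "a3 summable_on A" "a4 summable_on A" "a5 summable_on A" "a6 summable_on A"
  shows "(\<lambda>s. a1 s + a2 s + a3 s + c * a4 s + a5 s + a6 s) summable_on A \<and>
    infsum (\<lambda>s. a1 s + a2 s + a3 s + c * a4 s + a5 s + a6 s) A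
     = infsum a1 A + infsum a2 A + infsum a3 A + c * infsum a4 A + infsum a5 A + infsum a6 A"
proof -
  note S = assms
  have c4: "(\<lambda>s. c * a4 s) summable_on A" using S(4) by (rule summable_on_cmult_right)
  have s12: "(\<lambda>s. a1 s + a2 s) summable_on A" using summable_on_add[OF S(1) S(2)] .
  have s123: "(\<lambda>s. a1 s + a2 s + a3 s) summable_on A" using summable_on_add[OF s12 S(3)] .
  have s1234: "(\<lambda>s. a1 s + a2 s + a3 s + c * a4 s) summable_on A" using summable_on_add[OF s123 c4] .
  have s12345: "(\<lambda>s. a1 s + a2 s + a3 s + c * a4 s + a5 s) summable_on A" using summable_on_add[OF s1234 S(5)] .
  have s6: "(\<lambda>s. a1 s + a2 s + a3 s + c * a4 s + a5 s + a6 s) summable_on A" using summable_on_add[OF s12345 S(6)] .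
  have "infsum (\<lambda>s. a1 s + a2 s + a3 s + c * a4 s + a5 s + a6 s) A
     = infsum (\<lambda>s. a1 s + a2 s + a3 s + c * a4 s + a5 s) A + infsum a6 A"
    using infsum_add[OF s12345 S(6)] .
  also have "infsum (\<lambda>s. a1 s + a2 s + a3 s + c * a4 s + a5 s) A = infsum (\<lambda>s. a1 s + a2 s + a3 s + c * a4 s) A + infsum a5 A"
    using infsum_add[OF s1234 S(5)] .
  also have "infsum (\<lambda>s. a1 s + a2 s + a3 s + c * a4 s) A = infsum (\<lambda>s. a1 s + a2 s + a3 s) A + infsum (\<lambda>s. c * a4 s) A"
    using infsum_add[OF s123 c4] .
  also have "infsum (\<lambda>s. a1 s + a2 s + a3 s) A = infsum (\<lambda>s. a1 s + a2 s) A + infsum a3 A"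
    using infsum_add[OF s12 S(3)] .
  also have "infsum (\<lambda>s. a1 s + a2 s) A = infsum a1 A + infsum a2 A"
    using infsum_add[OF S(1) S(2)] .
  also have "infsum (\<lambda>s. c * a4 s) A = c * infsum a4 A"
    by (rule infsum_cmult_right) (use S(4) in auto)
  finally show ?thesis using s6 by simp
qed

lemma hb_diff: "\<bar>x\<bar> \<le> K \<Longrightarrow> \<bar>y\<bar> \<le> K \<Longrightarrow> \<bar>x - y\<bar> \<le> 2 * (K::real)" by linarith
lemma hb_half:
  assumes that: "\<bar>c'\<bar> \<le> 1" and a: "\<bar>c\<bar> \<le> 2 * (K::real)"
  shows "\<bar>c' * c\<bar> \<le> 2 * K"
proof -
  have "\<bar>c' * c\<bar> = \<bar>c'\<bar> * \<bar>c\<bar>" by (simp add: abs_mult)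
  also have "\<dots> \<le> 1 * \<bar>c\<bar>" using that by (intro mult_right_mono) auto
  finally show ?thesis using a by simp
qed
lemma sgn_le1: "\<bar>sgn (x::real)\<bar> \<le> 1" by (simp add: abs_sgn_eq)
lemma phi_alg: "mL * (d::real)\<^sup>2 + d\<^sup>2 * (m - mL) + 1/2 * (M - m) * d\<^sup>2 + 1/2 * (pL * sgn d * d\<^sup>2)
   + 1/2 * \<bar>d\<bar> * d * (p - pL) + 1/4 * \<bar>d\<bar> * d * (P - p) = d\<^sup>2 * (1/2 * (m + M) + 1/4 * sgn d * (p + P))"
proof -
  have e: "\<bar>d\<bar> * d = sgn d * d\<^sup>2" using sgn_sq[of d] by simp
  have "1/2 * \<bar>d\<bar> * d * (p - pL) = 1/2 * (sgn d * d\<^sup>2) * (p - pL)" using e by (metis mult.assoc)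
  moreover have "1/4 * \<bar>d\<bar> * d * (P - p) = 1/4 * (sgn d * d\<^sup>2) * (P - p)" using e by (metis mult.assoc)
  ultimately show ?thesis by (simp add: field_simps)
qed
lemma phi_alg2: "m * (d::real)\<^sup>2 + 1/2 * (M - m) * d\<^sup>2 + 1/2 * (p * sgn d * d\<^sup>2)
   + 1/4 * \<bar>d\<bar> * d * (P - p) = d\<^sup>2 * (1/2 * (m + M) + 1/4 * sgn d * (p + P))"
proof -
  have e: "\<bar>d\<bar> * d = sgn d * d\<^sup>2" using sgn_sq[of d] by simp
  have "1/4 * \<bar>d\<bar> * d * (P - p) = 1/4 * (sgn d * d\<^sup>2) * (P - p)" using e by (metis mult.assoc)
  then show ?thesis by (simp add: field_simps)
qed

lemma common_setup:
  assumes T: "T > 0" and pA: "price_ok T A" and pB: "price_ok T B"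
  shows "cadlag_on T (\<lambda>r. Mp A B r 0) \<and> cadlag_on T (\<lambda>r. Pp A B r 0)
     \<and> (\<forall>t\<in>{0..T}. C2_fun (A t) \<and> C2_fun (B t))"
proof -
  have C2: "C2_fun (A t)" "C2_fun (B t)" if "t \<in> {0..T}" for t
    using pA pB that unfolding price_ok_def by auto
  have cA: "cadlag_on T (\<lambda>t. deriv (A t) 0)" and cB: "cadlag_on T (\<lambda>t. deriv (B t) 0)"
    using pA pB unfolding price_ok_def by auto
  have "cadlag_on T (\<lambda>r. Mp A B r 0)"
    by (rule cadlag_combo[OF cA cB, of _ "1/2" "1/2"]) (simp add: Mp_eq[where A=A and B=B, OF C2] field_simps)
  moreover have "cadlag_on T (\<lambda>r. Pp A B r 0)"
    by (rule cadlag_combo[OF cA cB, of _ "1" "-1"]) (simp add: Pp_eq[where A=A and B=B, OF C2])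
  ultimately show ?thesis using C2 by auto
qed

lemma cadlag_case:
  assumes T: "T > 0" and pA: "price_ok T A" and pB: "price_ok T B"
    and st: "\<forall>t\<in>{0..T}. \<forall>y. Mp A B t y > - (1/2) * sgn y * Pp A B t y"
    and qv: "qv_cadlag T Z q"
  shows "nonneg_increasing T (cost_cadlag T A B Z q)"
proof -
  define \<mu> where "\<mu> = LS T q"
  have LSf: "finite_measure \<mu>" "sets \<mu> = sets borel" "\<And>s. s \<in> {0<..T} \<Longrightarrow> measure \<mu> {s} = (Z s - lft Z s)\<^sup>2"
    using LS_cadlag[OF T qv] unfolding \<mu>_def by auto
  define D where "D s = Z s - lft Z s" for s
  define m where "m r = Mp A B r 0" for r
  define p where "p r = Pp A B r 0" for r
  define mL where "mL = lft m"
  define pL where "pL = lft p"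
  define J where "J = {s \<in> {0<..T}. D s \<noteq> 0}"
  have stp: "cadlag_on T m" "cadlag_on T p" "\<And>t. t \<in> {0..T} \<Longrightarrow> C2_fun (A t) \<and> C2_fun (B t)"
    using common_setup[OF T pA pB] unfolding m_def[abs_def] p_def[abs_def] by auto
  have atom: "measure \<mu> {s} = (D s)\<^sup>2" if "s \<in> {0<..T}" for s
    using LSf(3)[OF that] unfolding D_def .
  have Jc: "countable J"
  proof (rule countable_subset[OF _ finite_measure.countable_support[OF LSf(1)]])
    show "J \<subseteq> {x. measure \<mu> {x} \<noteq> 0}" using atom unfolding J_def by auto
  qed
  have Js: "J \<in> sets \<mu>" using Jc LSf(2) by (simp add: sets.countable)
  define Q where "Q = measure \<mu> (space \<mu>)"
  have DR: "\<bar>D s\<bar> \<le> Q + 1" if "s \<in> {0<..T}" for s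
  proof -
    have "(D s)\<^sup>2 \<le> Q" using atom[OF that] finite_measure.bounded_measure[OF LSf(1)] unfolding Q_def by metis
    then show ?thesis using abs_le_sq1[of "D s"] by linarith
  qed
  obtain K where K: "\<And>t y. t \<in> {0..T} \<Longrightarrow> \<bar>y\<bar> \<le> Q + 1 \<Longrightarrow> \<bar>Mp A B t y\<bar> \<le> K \<and> \<bar>Pp A B t y\<bar> \<le> K"
    using price_bounds[OF pA pB, of "Q + 1"] by blast
  have Q0: "0 \<le> Q" unfolding Q_def by simp
  have mK: "\<bar>m t\<bar> \<le> K" "\<bar>p t\<bar> \<le> K" if "t \<in> {0..T}" for t
    using K[OF that, of 0] Q0 unfolding m_def p_def by auto
  have mpos: "0 < m t" if "t \<in> {0..T}" for t
    using st[rule_format, OF that, of 0] unfolding m_def by simp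
  have mlim: "\<exists>l. (m \<longlongrightarrow> l) (at_left s)" "\<exists>l. (p \<longlongrightarrow> l) (at_left s)" if "s \<in> {0<..T}" for s
    using stp(1,2) that unfolding cadlag_on_def by auto
  have mLK: "\<bar>mL s\<bar> \<le> K" "\<bar>pL s\<bar> \<le> K" "0 \<le> mL s" if s: "s \<in> {0<..T}" for s
    unfolding mL_def pL_def
    by (rule lft_bound[OF s mlim(1)[OF s] mK(1)], assumption)
       (rule lft_bound[OF s mlim(2)[OF s] mK(2)], assumption,
        rule lft_nonneg[OF s mlim(1)[OF s]], simp add: less_imp_le mpos)
  define \<phi> where "\<phi> s = (D s)\<^sup>2 * (1/2 * (m s + Mp A B s (D s)) + 1/4 * sgn (D s) * (p s + Pp A B s (D s)))" for s
  have main: "set_integrable \<mu> {0<..t} mL \<and> \<phi> summable_on ({0<..t} \<inter> J) \<and>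
     cost_cadlag T A B Z q t = set_lebesgue_integral \<mu> ({0<..t} - J) mL + infsum \<phi> ({0<..t} \<inter> J)"
    if t: "t \<in> {0..T}" for t
  proof -
    define Jt where "Jt = {0<..t} \<inter> J"
    have Jtc: "countable Jt" unfolding Jt_def using Jc by auto
    have JtT: "Jt \<subseteq> {0<..T}" unfolding Jt_def J_def by auto
    have Jts: "Jt \<in> sets \<mu>" using Jtc LSf(2) by (simp add: sets.countable)
    have Its: "{0<..t} \<in> sets \<mu>" using LSf(2) by simp
    have D0: "D s = 0" if "s \<in> {0<..t}" "s \<notin> Jt" for s using that t unfolding Jt_def J_def by auto
    have measL: "(\<lambda>s. indicator {0<..t} s * mL s) \<in> borel_measurable \<mu>"
    proof -
      have "(\<lambda>s. indicator {0<..t} s * lft m s) \<in> borel_measurable borel"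
        by (rule meas_left) (use t mlim in auto)
      then show ?thesis using measurable_cong_sets[OF LSf(2) refl] unfolding mL_def by blast
    qed
    have intL: "set_integrable \<mu> {0<..t} mL"
      unfolding set_integrable_def
    proof (rule integrableI_bounded_set[where A="{0<..t}" and B=K])
      show "emeasure \<mu> {0<..t} < \<infinity>"
        using finite_measure.emeasure_finite[OF LSf(1)] by (simp add: less_top[symmetric])
      show "AE x in \<mu>. x \<in> {0<..t} \<longrightarrow> norm (indicator {0<..t} x *\<^sub>R mL x) \<le> K"
        using mLK(1) t by (intro AE_I2) auto
    qed (use Its measL in auto)
    have I1: "set_lebesgue_integral \<mu> {0<..t} mL = set_lebesgue_integral \<mu> ({0<..t} - J) mL + set_lebesgue_integral \<mu> Jt mL"
    proof -
      have "{0<..t} = ({0<..t} - J) \<union> Jt" unfolding Jt_def by auto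
      moreover have "set_lebesgue_integral \<mu> (({0<..t} - J) \<union> Jt) mL = set_lebesgue_integral \<mu> ({0<..t} - J) mL + set_lebesgue_integral \<mu> Jt mL"
        by (rule set_integral_Un) (auto simp: Jt_def intro!: set_integrable_subset[OF intL] Its Js Jts)
      ultimately show ?thesis by simp
    qed
    have atomL: "set_lebesgue_integral \<mu> Jt mL = infsum (\<lambda>s. mL s * (D s)\<^sup>2) Jt"
    proof -
      have "set_lebesgue_integral \<mu> Jt mL = infsum (\<lambda>s. mL s * measure \<mu> {s}) Jt"
        using atom_real[OF LSf(1,2) Jtc, of mL K] mLK(1) JtT by blast
      also have "\<dots> = infsum (\<lambda>s. mL s * (D s)\<^sup>2) Jt"
        by (rule infsum_cong) (use atom JtT in auto)
      finally show ?thesis .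
    qed
    have I4: "set_lebesgue_integral \<mu> {0<..t} (\<lambda>s. pL s * sgn (D s)) = infsum (\<lambda>s. pL s * sgn (D s) * (D s)\<^sup>2) Jt"
    proof -
      have "set_lebesgue_integral \<mu> {0<..t} (\<lambda>s. pL s * sgn (D s)) = set_lebesgue_integral \<mu> Jt (\<lambda>s. pL s * sgn (D s))"
        unfolding set_lebesgue_integral_def
        by (rule Bochner_Integration.integral_cong) (use D0 in \<open>auto simp: Jt_def split: split_indicator\<close>)
      also have "\<dots> = infsum (\<lambda>s. pL s * sgn (D s) * measure \<mu> {s}) Jt"
      proof -
        have "\<bar>pL s * sgn (D s)\<bar> \<le> K" if "s \<in> Jt" for s
        proof -
          have "\<bar>pL s * sgn (D s)\<bar> \<le> \<bar>pL s\<bar> * 1" unfolding abs_mult by (intro mult_left_mono) (auto simp: abs_sgn_eq)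
          then show ?thesis using mLK(2)[of s] that JtT by auto
        qed
        then show ?thesis using atom_real[OF LSf(1,2) Jtc, of "\<lambda>s. pL s * sgn (D s)" K] by auto
      qed
      also have "\<dots> = infsum (\<lambda>s. pL s * sgn (D s) * (D s)\<^sup>2) Jt"
        by (rule infsum_cong) (use atom JtT in auto)
      finally show ?thesis .
    qed
    have restr: "infsum f {0<..t} = infsum f Jt" if "\<And>s. s \<in> {0<..t} \<Longrightarrow> s \<notin> Jt \<Longrightarrow> f s = 0" for f :: "real \<Rightarrow> real"
      by (rule infsum_cong_neutral) (use that in \<open>auto simp: Jt_def\<close>)
    define a1 where "a1 s = mL s * (D s)\<^sup>2" for s
    define a2 where "a2 s = (D s)\<^sup>2 * (m s - mL s)" for s
    define a3 where "a3 s = 1/2 * (Mp A B s (D s) - m s) * (D s)\<^sup>2" for s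
    define a4 where "a4 s = pL s * sgn (D s) * (D s)\<^sup>2" for s
    define a5 where "a5 s = 1/2 * \<bar>D s\<bar> * D s * (p s - pL s)" for s
    define a6 where "a6 s = 1/4 * \<bar>D s\<bar> * D s * (Pp A B s (D s) - p s)" for s
    have bnd: "\<bar>a s\<bar> \<le> 2 * K * measure \<mu> {s}" if sJ: "s \<in> Jt" and aS: "a \<in> {a1, a2, a3, a4, a5, a6}" for s a
    proof -
      have s: "s \<in> {0<..T}" using that JtT by auto
      have sT: "s \<in> {0..T}" using s by auto
      have k1: "\<bar>mL s\<bar> \<le> K" "\<bar>pL s\<bar> \<le> K" using mLK s by auto
      have k2: "\<bar>m s\<bar> \<le> K" "\<bar>p s\<bar> \<le> K" using mK sT by auto
      have k3: "\<bar>Mp A B s (D s)\<bar> \<le> K" "\<bar>Pp A B s (D s)\<bar> \<le> K" using K[OF sT DR[OF s]] by auto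
      have K0: "0 \<le> K" using k1 by linarith
      have e: "measure \<mu> {s} = (D s)\<^sup>2" using atom s by simp
      have sgnb: "\<bar>sgn (D s) * y\<bar> \<le> \<bar>y\<bar>" for y by (cases "D s = 0") (auto simp: abs_mult abs_sgn_eq)
      have ad: "\<bar>D s\<bar> * D s = sgn (D s) * (D s)\<^sup>2" using sgn_sq[of "D s"] by simp
      have gen: "\<bar>c * (D s)\<^sup>2\<bar> \<le> 2 * K * measure \<mu> {s}" if "\<bar>c\<bar> \<le> 2 * K" for c
        unfolding e abs_mult abs_power2 using that by (intro mult_right_mono) auto
      have "\<exists>c. a s = c * (D s)\<^sup>2 \<and> \<bar>c\<bar> \<le> 2 * K"
      proof -
        consider "a = a1" | "a = a2" | "a = a3" | "a = a4" | "a = a5" | "a = a6" using aS by fast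
        then show ?thesis
        proof cases
          case 1
          have "a s = mL s * (D s)\<^sup>2" by (simp add: 1 a1_def)
          moreover have "\<bar>mL s\<bar> \<le> 2 * K" using k1 K0 by linarith
          ultimately show ?thesis by blast
        next
          case 2
          have "a s = (m s - mL s) * (D s)\<^sup>2" by (simp add: 2 a2_def mult.commute)
          moreover have "\<bar>m s - mL s\<bar> \<le> 2 * K" by (rule hb_diff[OF k2(1) k1(1)])
          ultimately show ?thesis by blast
        next
          case 3
          have "a s = (1/2 * (Mp A B s (D s) - m s)) * (D s)\<^sup>2" by (simp add: 3 a3_def)
          moreover have "\<bar>1/2 * (Mp A B s (D s) - m s)\<bar> \<le> 2 * K"
            by (rule hb_half[OF _ hb_diff[OF k3(1) k2(1)]]) simp
          ultimately show ?thesis by blast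
        next
          case 4
          have "a s = (sgn (D s) * pL s) * (D s)\<^sup>2" by (simp add: 4 a4_def)
          moreover have "\<bar>sgn (D s) * pL s\<bar> \<le> 2 * K"
            by (rule hb_half[OF sgn_le1]) (use k1 K0 in linarith)
          ultimately show ?thesis by blast
        next
          case 5
          have "a s = (1/2 * (sgn (D s) * (p s - pL s))) * (D s)\<^sup>2"
            unfolding 5 a5_def using ad by (metis mult.assoc mult.commute)
          moreover have "\<bar>1/2 * (sgn (D s) * (p s - pL s))\<bar> \<le> 2 * K"
            by (rule hb_half[OF _ hb_half[OF sgn_le1 hb_diff[OF k2(2) k1(2)]]]) simp
          ultimately show ?thesis by blast
        next
          case 6
          have "a s = (1/4 * (sgn (D s) * (Pp A B s (D s) - p s))) * (D s)\<^sup>2"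
            unfolding 6 a6_def using ad by (metis mult.assoc mult.commute)
          moreover have "\<bar>1/4 * (sgn (D s) * (Pp A B s (D s) - p s))\<bar> \<le> 2 * K"
            by (rule hb_half[OF _ hb_half[OF sgn_le1 hb_diff[OF k3(2) k2(2)]]]) simp
          ultimately show ?thesis by blast
        qed
      qed
      then show ?thesis using gen by auto
    qed
    have msum: "(\<lambda>s. 2 * K * measure \<mu> {s}) summable_on Jt"
      by (rule summable_on_cmult_right, rule atoms_summable[OF LSf(1,2)])
    have summ: "a summable_on Jt" if "a \<in> {a1, a2, a3, a4, a5, a6}" for a
      by (rule real_summable_comparison[OF msum]) (use bnd that in auto)
    have S6: "(\<lambda>s. a1 s + a2 s + a3 s + 1/2 * a4 s + a5 s + a6 s) summable_on Jt \<and>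
      infsum (\<lambda>s. a1 s + a2 s + a3 s + 1/2 * a4 s + a5 s + a6 s) Jt
       = infsum a1 Jt + infsum a2 Jt + infsum a3 Jt + 1/2 * infsum a4 Jt + infsum a5 Jt + infsum a6 Jt"
      by (rule six_sum) (use summ in auto)
    have phieq: "a1 s + a2 s + a3 s + 1/2 * a4 s + a5 s + a6 s = \<phi> s" for s
      unfolding a1_def a2_def a3_def a4_def a5_def a6_def \<phi>_def by (rule phi_alg)
    have cost: "cost_cadlag T A B Z q t = set_lebesgue_integral \<mu> {0<..t} mL + infsum a2 {0<..t} + infsum a3 {0<..t}
       + 1/2 * set_lebesgue_integral \<mu> {0<..t} (\<lambda>s. pL s * sgn (D s)) + infsum a5 {0<..t} + infsum a6 {0<..t}"
      unfolding cost_cadlag_def \<mu>_def mL_def pL_def m_def p_def D_def a2_def a3_def a5_def a6_def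
      by (simp add: mult.commute)
    have r2: "infsum a2 {0<..t} = infsum a2 Jt" by (rule restr) (simp add: a2_def D0)
    have r3: "infsum a3 {0<..t} = infsum a3 Jt" by (rule restr) (simp add: a3_def D0)
    have r5: "infsum a5 {0<..t} = infsum a5 Jt" by (rule restr) (simp add: a5_def D0)
    have r6: "infsum a6 {0<..t} = infsum a6 Jt" by (rule restr) (simp add: a6_def D0)
    have "cost_cadlag T A B Z q t = set_lebesgue_integral \<mu> ({0<..t} - J) mL
       + (infsum a1 Jt + infsum a2 Jt + infsum a3 Jt + 1/2 * infsum a4 Jt + infsum a5 Jt + infsum a6 Jt)"
      unfolding cost I1 atomL I4 r2 r3 r5 r6 a1_def[symmetric] a4_def[symmetric] by simp
    also have "\<dots> = set_lebesgue_integral \<mu> ({0<..t} - J) mL + infsum \<phi> Jt"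
      using S6 phieq by simp
    finally show ?thesis using S6 phieq intL unfolding Jt_def by simp
  qed
  show ?thesis
  proof (rule final_mono[where I="\<lambda>t. {0<..t}" and J=J and \<mu>=\<mu> and g=mL and \<phi>=\<phi>])
    show "cost_cadlag T A B Z q t = set_lebesgue_integral \<mu> ({0<..t} - J) mL + infsum \<phi> ({0<..t} \<inter> J)"
      if "t \<in> {0..T}" for t using main[OF that] by simp
    show "{0<..t} \<in> sets \<mu>" for t using LSf(2) by simp
    show "J \<in> sets \<mu>" by (rule Js)
    show "\<phi> summable_on ({0<..T} \<inter> J)" using main[of T] T by simp
    show "set_integrable \<mu> {0<..T} mL" using main[of T] T by simp
    show "0 \<le> mL s" if "s \<in> {0<..T} - J" for s using mLK(3) that by auto
    show "0 \<le> \<phi> s" if sJ: "s \<in> {0<..T} \<inter> J" for s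
    proof -
      have sT: "s \<in> {0..T}" using sJ by auto
      have c2: "C2_fun (A s)" "C2_fun (B s)" using stp(3)[OF sT] by auto
      have stl: "\<forall>y. Mp A B s y > - (1/2) * sgn y * Pp A B s y" using st sT by blast
      show ?thesis using phi_nonneg[OF c2 stl, of "D s"] unfolding \<phi>_def m_def p_def .
    qed
  qed (use T in auto)
qed


lemma four_sum:
  fixes a1 a3 a4 a6 :: "'a \<Rightarrow> real"
  assumes "a1 summable_on A" "a3 summable_on A" "a4 summable_on A" "a6 summable_on A"
  shows "(\<lambda>s. a1 s + a3 s + c * a4 s + a6 s) summable_on A \<and>
    infsum (\<lambda>s. a1 s + a3 s + c * a4 s + a6 s) A
     = infsum a1 A + infsum a3 A + c * infsum a4 A + infsum a6 A"
proof -
  note S = assms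
  have c4: "(\<lambda>s. c * a4 s) summable_on A" using S(3) by (rule summable_on_cmult_right)
  have s13: "(\<lambda>s. a1 s + a3 s) summable_on A" using summable_on_add[OF S(1) S(2)] .
  have s134: "(\<lambda>s. a1 s + a3 s + c * a4 s) summable_on A" using summable_on_add[OF s13 c4] .
  have s6: "(\<lambda>s. a1 s + a3 s + c * a4 s + a6 s) summable_on A" using summable_on_add[OF s134 S(4)] .
  have "infsum (\<lambda>s. a1 s + a3 s + c * a4 s + a6 s) A = infsum (\<lambda>s. a1 s + a3 s + c * a4 s) A + infsum a6 A"
    using infsum_add[OF s134 S(4)] .
  also have "infsum (\<lambda>s. a1 s + a3 s + c * a4 s) A = infsum (\<lambda>s. a1 s + a3 s) A + infsum (\<lambda>s. c * a4 s) A"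
    using infsum_add[OF s13 c4] .
  also have "infsum (\<lambda>s. a1 s + a3 s) A = infsum a1 A + infsum a3 A"
    using infsum_add[OF S(1) S(2)] .
  also have "infsum (\<lambda>s. c * a4 s) A = c * infsum a4 A"
    by (rule infsum_cmult_right) (use S(3) in auto)
  finally show ?thesis using s6 by simp
qed

lemma caglad_case:
  assumes T: "T > 0" and pA: "price_ok T A" and pB: "price_ok T B"
    and st: "\<forall>t\<in>{0..T}. \<forall>y. Mp A B t y > - (1/2) * sgn y * Pp A B t y"
    and qv: "qv_caglad T Z q"
  shows "nonneg_increasing T (cost_caglad T A B Z q)"
proof -
  define \<mu> where "\<mu> = LS T q"
  have LSf: "finite_measure \<mu>" "sets \<mu> = sets borel" "\<And>s. s \<in> {0..<T} \<Longrightarrow> measure \<mu> {s} = (rgt Z s - Z s)\<^sup>2"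
    using LS_caglad[OF T qv] unfolding \<mu>_def by auto
  define D where "D s = rgt Z s - Z s" for s
  define m where "m r = Mp A B r 0" for r
  define p where "p r = Pp A B r 0" for r
  define J where "J = {s \<in> {0..<T}. D s \<noteq> 0}"
  have stp: "cadlag_on T m" "cadlag_on T p" "\<And>t. t \<in> {0..T} \<Longrightarrow> C2_fun (A t) \<and> C2_fun (B t)"
    using common_setup[OF T pA pB] unfolding m_def[abs_def] p_def[abs_def] by auto
  have atom: "measure \<mu> {s} = (D s)\<^sup>2" if "s \<in> {0..<T}" for s
    using LSf(3)[OF that] unfolding D_def .
  have Jc: "countable J"
  proof (rule countable_subset[OF _ finite_measure.countable_support[OF LSf(1)]])
    show "J \<subseteq> {x. measure \<mu> {x} \<noteq> 0}" using atom unfolding J_def by auto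
  qed
  have Js: "J \<in> sets \<mu>" using Jc LSf(2) by (simp add: sets.countable)
  define Q where "Q = measure \<mu> (space \<mu>)"
  have DR: "\<bar>D s\<bar> \<le> Q + 1" if "s \<in> {0..<T}" for s
  proof -
    have "(D s)\<^sup>2 \<le> Q" using atom[OF that] finite_measure.bounded_measure[OF LSf(1)] unfolding Q_def by metis
    then show ?thesis using abs_le_sq1[of "D s"] by linarith
  qed
  obtain K where K: "\<And>t y. t \<in> {0..T} \<Longrightarrow> \<bar>y\<bar> \<le> Q + 1 \<Longrightarrow> \<bar>Mp A B t y\<bar> \<le> K \<and> \<bar>Pp A B t y\<bar> \<le> K"
    using price_bounds[OF pA pB, of "Q + 1"] by blast
  have Q0: "0 \<le> Q" unfolding Q_def by simp
  have mK: "\<bar>m t\<bar> \<le> K" "\<bar>p t\<bar> \<le> K" if "t \<in> {0..T}" for t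
    using K[OF that, of 0] Q0 unfolding m_def p_def by auto
  have mpos: "0 < m t" if "t \<in> {0..T}" for t
    using st[rule_format, OF that, of 0] unfolding m_def by simp
  have mrc: "continuous (at_right s) m" if "s \<in> {0..<T}" for s
    using stp(1) that unfolding cadlag_on_def by auto
  define \<phi> where "\<phi> s = (D s)\<^sup>2 * (1/2 * (m s + Mp A B s (D s)) + 1/4 * sgn (D s) * (p s + Pp A B s (D s)))" for s
  have main: "set_integrable \<mu> {0..<t} m \<and> \<phi> summable_on ({0..<t} \<inter> J) \<and>
     cost_caglad T A B Z q t = set_lebesgue_integral \<mu> ({0..<t} - J) m + infsum \<phi> ({0..<t} \<inter> J)"
    if t: "t \<in> {0..T}" for t
  proof -
    define Jt where "Jt = {0..<t} \<inter> J"
    have Jtc: "countable Jt" unfolding Jt_def using Jc by auto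
    have JtT: "Jt \<subseteq> {0..<T}" unfolding Jt_def J_def by auto
    have Jts: "Jt \<in> sets \<mu>" using Jtc LSf(2) by (simp add: sets.countable)
    have Its: "{0..<t} \<in> sets \<mu>" using LSf(2) by simp
    have D0: "D s = 0" if "s \<in> {0..<t}" "s \<notin> Jt" for s using that t unfolding Jt_def J_def by auto
    have measL: "(\<lambda>s. indicator {0..<t} s * m s) \<in> borel_measurable \<mu>"
    proof -
      have "(\<lambda>s. indicator {0..<t} s * m s) \<in> borel_measurable borel"
        by (rule meas_right) (use t mrc in auto)
      then show ?thesis using measurable_cong_sets[OF LSf(2) refl] by blast
    qed
    have intL: "set_integrable \<mu> {0..<t} m"
      unfolding set_integrable_def
    proof (rule integrableI_bounded_set[where A="{0..<t}" and B=K])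
      show "emeasure \<mu> {0..<t} < \<infinity>"
        using finite_measure.emeasure_finite[OF LSf(1)] by (simp add: less_top[symmetric])
      show "AE x in \<mu>. x \<in> {0..<t} \<longrightarrow> norm (indicator {0..<t} x *\<^sub>R m x) \<le> K"
        using mK(1) t by (intro AE_I2) auto
    qed (use Its measL in auto)
    have I1: "set_lebesgue_integral \<mu> {0..<t} m = set_lebesgue_integral \<mu> ({0..<t} - J) m + set_lebesgue_integral \<mu> Jt m"
    proof -
      have "{0..<t} = ({0..<t} - J) \<union> Jt" unfolding Jt_def by auto
      moreover have "set_lebesgue_integral \<mu> (({0..<t} - J) \<union> Jt) m = set_lebesgue_integral \<mu> ({0..<t} - J) m + set_lebesgue_integral \<mu> Jt m"
        by (rule set_integral_Un) (auto simp: Jt_def intro!: set_integrable_subset[OF intL] Its Js Jts)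
      ultimately show ?thesis by simp
    qed
    have atomL: "set_lebesgue_integral \<mu> Jt m = infsum (\<lambda>s. m s * (D s)\<^sup>2) Jt"
    proof -
      have "set_lebesgue_integral \<mu> Jt m = infsum (\<lambda>s. m s * measure \<mu> {s}) Jt"
        using atom_real[OF LSf(1,2) Jtc, of m K] mK(1) JtT by fastforce
      also have "\<dots> = infsum (\<lambda>s. m s * (D s)\<^sup>2) Jt"
        by (rule infsum_cong) (use atom JtT in auto)
      finally show ?thesis .
    qed
    have I4: "set_lebesgue_integral \<mu> {0..<t} (\<lambda>s. p s * sgn (D s)) = infsum (\<lambda>s. p s * sgn (D s) * (D s)\<^sup>2) Jt"
    proof -
      have "set_lebesgue_integral \<mu> {0..<t} (\<lambda>s. p s * sgn (D s)) = set_lebesgue_integral \<mu> Jt (\<lambda>s. p s * sgn (D s))"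
        unfolding set_lebesgue_integral_def
        by (rule Bochner_Integration.integral_cong) (use D0 in \<open>auto simp: Jt_def split: split_indicator\<close>)
      also have "\<dots> = infsum (\<lambda>s. p s * sgn (D s) * measure \<mu> {s}) Jt"
      proof -
        have "\<bar>p s * sgn (D s)\<bar> \<le> K" if "s \<in> Jt" for s
        proof -
          have "\<bar>p s * sgn (D s)\<bar> \<le> \<bar>p s\<bar> * 1" unfolding abs_mult by (intro mult_left_mono) (auto simp: abs_sgn_eq)
          then show ?thesis using mK(2)[of s] that JtT by auto
        qed
        then show ?thesis using atom_real[OF LSf(1,2) Jtc, of "\<lambda>s. p s * sgn (D s)" K] by auto
      qed
      also have "\<dots> = infsum (\<lambda>s. p s * sgn (D s) * (D s)\<^sup>2) Jt"
        by (rule infsum_cong) (use atom JtT in auto)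
      finally show ?thesis .
    qed
    have restr: "infsum f {0..<t} = infsum f Jt" if "\<And>s. s \<in> {0..<t} \<Longrightarrow> s \<notin> Jt \<Longrightarrow> f s = 0" for f :: "real \<Rightarrow> real"
      by (rule infsum_cong_neutral) (use that in \<open>auto simp: Jt_def\<close>)
    define a1 where "a1 s = m s * (D s)\<^sup>2" for s
    define a3 where "a3 s = 1/2 * (Mp A B s (D s) - m s) * (D s)\<^sup>2" for s
    define a4 where "a4 s = p s * sgn (D s) * (D s)\<^sup>2" for s
    define a6 where "a6 s = 1/4 * \<bar>D s\<bar> * D s * (Pp A B s (D s) - p s)" for s
    have bnd: "\<bar>a s\<bar> \<le> 2 * K * measure \<mu> {s}" if sJ: "s \<in> Jt" and aS: "a \<in> {a1, a3, a4, a6}" for s a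
    proof -
      have s: "s \<in> {0..<T}" using sJ JtT by auto
      have sT: "s \<in> {0..T}" using s by auto
      have k2: "\<bar>m s\<bar> \<le> K" "\<bar>p s\<bar> \<le> K" using mK sT by auto
      have k3: "\<bar>Mp A B s (D s)\<bar> \<le> K" "\<bar>Pp A B s (D s)\<bar> \<le> K" using K[OF sT DR[OF s]] by auto
      have K0: "0 \<le> K" using k2 by linarith
      have e: "measure \<mu> {s} = (D s)\<^sup>2" using atom s by simp
      have ad: "\<bar>D s\<bar> * D s = sgn (D s) * (D s)\<^sup>2" using sgn_sq[of "D s"] by simp
      have gen: "\<bar>c * (D s)\<^sup>2\<bar> \<le> 2 * K * measure \<mu> {s}" if "\<bar>c\<bar> \<le> 2 * K" for c
        unfolding e abs_mult abs_power2 using that by (intro mult_right_mono) auto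
      have "\<exists>c. a s = c * (D s)\<^sup>2 \<and> \<bar>c\<bar> \<le> 2 * K"
      proof -
        consider "a = a1" | "a = a3" | "a = a4" | "a = a6" using aS by fast
        then show ?thesis
        proof cases
          case 1
          have "a s = m s * (D s)\<^sup>2" by (simp add: 1 a1_def)
          moreover have "\<bar>m s\<bar> \<le> 2 * K" using k2 K0 by linarith
          ultimately show ?thesis by blast
        next
          case 2
          have "a s = (1/2 * (Mp A B s (D s) - m s)) * (D s)\<^sup>2" by (simp add: 2 a3_def)
          moreover have "\<bar>1/2 * (Mp A B s (D s) - m s)\<bar> \<le> 2 * K"
            by (rule hb_half[OF _ hb_diff[OF k3(1) k2(1)]]) simp
          ultimately show ?thesis by blast
        next
          case 3
          have "a s = (sgn (D s) * p s) * (D s)\<^sup>2" by (simp add: 3 a4_def)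
          moreover have "\<bar>sgn (D s) * p s\<bar> \<le> 2 * K"
            by (rule hb_half[OF sgn_le1]) (use k2 K0 in linarith)
          ultimately show ?thesis by blast
        next
          case 4
          have "a s = (1/4 * (sgn (D s) * (Pp A B s (D s) - p s))) * (D s)\<^sup>2"
            unfolding 4 a6_def using ad by (metis mult.assoc mult.commute)
          moreover have "\<bar>1/4 * (sgn (D s) * (Pp A B s (D s) - p s))\<bar> \<le> 2 * K"
            by (rule hb_half[OF _ hb_half[OF sgn_le1 hb_diff[OF k3(2) k2(2)]]]) simp
          ultimately show ?thesis by blast
        qed
      qed
      then show ?thesis using gen by auto
    qed
    have msum: "(\<lambda>s. 2 * K * measure \<mu> {s}) summable_on Jt"
      by (rule summable_on_cmult_right, rule atoms_summable[OF LSf(1,2)])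
    have summ: "a summable_on Jt" if "a \<in> {a1, a3, a4, a6}" for a
      by (rule real_summable_comparison[OF msum]) (use bnd that in auto)
    have S4: "(\<lambda>s. a1 s + a3 s + 1/2 * a4 s + a6 s) summable_on Jt \<and>
      infsum (\<lambda>s. a1 s + a3 s + 1/2 * a4 s + a6 s) Jt
       = infsum a1 Jt + infsum a3 Jt + 1/2 * infsum a4 Jt + infsum a6 Jt"
      by (rule four_sum) (use summ in auto)
    have phieq: "a1 s + a3 s + 1/2 * a4 s + a6 s = \<phi> s" for s
      unfolding a1_def a3_def a4_def a6_def \<phi>_def by (rule phi_alg2)
    have cost: "cost_caglad T A B Z q t = set_lebesgue_integral \<mu> {0..<t} m + infsum a3 {0..<t}
       + 1/2 * set_lebesgue_integral \<mu> {0..<t} (\<lambda>s. p s * sgn (D s)) + infsum a6 {0..<t}"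
      unfolding cost_caglad_def \<mu>_def m_def p_def D_def a3_def a6_def
      by simp
    have r3: "infsum a3 {0..<t} = infsum a3 Jt" by (rule restr) (simp add: a3_def D0)
    have r6: "infsum a6 {0..<t} = infsum a6 Jt" by (rule restr) (simp add: a6_def D0)
    have "cost_caglad T A B Z q t = set_lebesgue_integral \<mu> ({0..<t} - J) m
       + (infsum a1 Jt + infsum a3 Jt + 1/2 * infsum a4 Jt + infsum a6 Jt)"
      unfolding cost I1 atomL I4 r3 r6 a1_def[symmetric] a4_def[symmetric] by simp
    also have "\<dots> = set_lebesgue_integral \<mu> ({0..<t} - J) m + infsum \<phi> Jt"
      using S4 phieq by simp
    finally show ?thesis using S4 phieq intL unfolding Jt_def by simp
  qed
  show ?thesis
  proof (rule final_mono[where I="\<lambda>t. {0..<t}" and J=J and \<mu>=\<mu> and g=m and \<phi>=\<phi>])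
    show "cost_caglad T A B Z q t = set_lebesgue_integral \<mu> ({0..<t} - J) m + infsum \<phi> ({0..<t} \<inter> J)"
      if "t \<in> {0..T}" for t using main[OF that] by simp
    show "{0..<t} \<in> sets \<mu>" for t using LSf(2) by simp
    show "J \<in> sets \<mu>" by (rule Js)
    show "\<phi> summable_on ({0..<T} \<inter> J)" using main[of T] T by simp
    show "set_integrable \<mu> {0..<T} m" using main[of T] T by simp
    show "0 \<le> m s" if "s \<in> {0..<T} - J" for s using mpos[of s] that by auto
    show "0 \<le> \<phi> s" if sJ: "s \<in> {0..<T} \<inter> J" for s
    proof -
      have sT: "s \<in> {0..T}" using sJ by auto
      have c2: "C2_fun (A s)" "C2_fun (B s)" using stp(3)[OF sT] by auto
      have stl: "\<forall>y. Mp A B s y > - (1/2) * sgn y * Pp A B s y" using st sT by blast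
      show ?thesis using phi_nonneg[OF c2 stl, of "D s"] unfolding \<phi>_def m_def p_def .
    qed
  qed (use T in auto)
qed

theorem lemma1:
  fixes T :: real and A B :: "real \<Rightarrow> real \<Rightarrow> real" and Z q :: "real \<Rightarrow> real"
  assumes "T > 0"
    and "price_ok T A" and "price_ok T B"
    and "\<forall>t\<in>{0..T}. \<forall>y. Mp A B t y > - (1/2) * sgn y * Pp A B t y"
  shows "(cadlag_on T Z \<and> qv_cadlag T Z q \<longrightarrow> nonneg_increasing T (cost_cadlag T A B Z q))
       \<and> (caglad_on T Z \<and> qv_caglad T Z q \<longrightarrow> nonneg_increasing T (cost_caglad T A B Z q))"
  using cadlag_case[OF assms] caglad_case[OF assms] by blast

end
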